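(* Let $n\ge 2$ and $m\ge 8$, and let $D$ be a pebbling distribution on the Jahangir graph $J_{n,m}$ such that $D(P_0)=0$ (no pebbles on $v_0,v_1,\dots,v_n$) and none of $u$, $v_0$, $v_n$ is reachable from $D$. Then $|D|\le\alpha$, where $$\alpha=\begin{cases}\frac{m}{2}\big(f(C_n)+f(C_{n+2})-2\big)-f(C_{n+2})+1, & m \text{ even},\\[2pt] \frac{m-1}{2}\big(f(C_n)+f(C_{n+2})-2\big)+f(C_{n+1})-f(C_{n+2}), & m\text{ odd}.\end{cases}$$ Moreover this bound is tight: there is a distribution $D^*$ on $J_{n,m}$ with $D^*(P_0)=0$, none of $u,v_0,v_n$ reachable, and $|D^*|=\alpha$.
   Context: The Jahangir graph $J_{n,m}$ ($m\ge3$) consists of the cycle $C_{nm}=v_0v_1\cdots v_{nm-1}v_0$ together with an extra vertex $u$ adjacent to $v_{ni}$ for $0\le i\le m-1$. For $0\le i\le m-1$, $P_i$ denotes the path $v_{ni}v_{ni+1}\cdots v_{n(i+1)}$ (indices mod $nm$). A pebbling distribution $D$ assigns a nonnegative integer number of pebbles to each vertex; $|D|$ is the total and $D(A)$ the total on a set $A$. A pebbling move removes two pebbles from a vertex and places one on an adjacent vertex; a vertex is reachable from $D$ if some sequence of pebbling moves in $J_{n,m}$ puts a pebble on it. $f(C_k)$ is the pebbling number of the $k$-cycle: $f(C_{2k'})=2^{k'}$, $f(C_{2k'+1})=2\lfloor 2^{k'+1}/3\rfloor+1$ (with these formulas used as convention for $k<3$, e.g. $f(C_2)=2$). *)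

theory Defs
  imports Main
begin

datatype jvert = U | V nat

definition jvertices :: "nat \<Rightarrow> nat \<Rightarrow> jvert set" where
  "jvertices n m = insert U (V ` {..<n*m})"

definition jadj :: "nat \<Rightarrow> nat \<Rightarrow> jvert \<Rightarrow> jvert \<Rightarrow> bool" where
  "jadj n m x y = (case (x, y) of
      (V i, V j) \<Rightarrow> i < n*m \<and> j < n*m \<and> i \<noteq> j \<and> (j = (i + 1) mod (n*m) \<or> i = (j + 1) mod (n*m))
    | (U, V j) \<Rightarrow> j < n*m \<and> n dvd j
    | (V i, U) \<Rightarrow> i < n*m \<and> n dvd i
    | (U, U) \<Rightarrow> False)"

definition is_distribution :: "nat \<Rightarrow> nat \<Rightarrow> (jvert \<Rightarrow> nat) \<Rightarrow> bool" where
  "is_distribution n m D = (\<forall>x. x \<notin> jvertices n m \<longrightarrow> D x = 0)"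

definition dsize :: "nat \<Rightarrow> nat \<Rightarrow> (jvert \<Rightarrow> nat) \<Rightarrow> nat" where
  "dsize n m D = (\<Sum>x\<in>jvertices n m. D x)"

definition pmove :: "nat \<Rightarrow> nat \<Rightarrow> (jvert \<Rightarrow> nat) \<Rightarrow> (jvert \<Rightarrow> nat) \<Rightarrow> bool" where
  "pmove n m D D' = (\<exists>x y. jadj n m x y \<and> D x \<ge> 2 \<and> D' = (D(x := D x - 2))(y := D y + 1))"

definition reachable :: "nat \<Rightarrow> nat \<Rightarrow> (jvert \<Rightarrow> nat) \<Rightarrow> jvert \<Rightarrow> bool" where
  "reachable n m D t = (\<exists>D'. (pmove n m)\<^sup>*\<^sup>* D D' \<and> D' t \<ge> 1)"

text \<open>Pebbling number of the k-cycle (formula, also used as convention for k < 3).\<close>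
definition fC :: "nat \<Rightarrow> nat" where
  "fC k = (if even k then 2 ^ (k div 2) else 2 * (2 ^ (k div 2 + 1) div 3) + 1)"

definition alpha :: "nat \<Rightarrow> nat \<Rightarrow> int" where
  "alpha n m = (if even m
     then int (m div 2) * (int (fC n) + int (fC (n+2)) - 2) - int (fC (n+2)) + 1
     else int ((m - 1) div 2) * (int (fC n) + int (fC (n+2)) - 2) + int (fC (n+1)) - int (fC (n+2)))"

definition good_dist :: "nat \<Rightarrow> nat \<Rightarrow> (jvert \<Rightarrow> nat) \<Rightarrow> bool" where
  "good_dist n m D = (is_distribution n m D \<and> (\<forall>i\<le>n. D (V i) = 0)
     \<and> \<not> reachable n m D U \<and> \<not> reachable n m D (V 0) \<and> \<not> reachable n m D (V n))"

end

theory Submission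
  imports Defs
begin


function lc :: "(nat \<Rightarrow> nat) \<Rightarrow> nat \<Rightarrow> nat \<Rightarrow> nat" where
  "lc g a i = (if i \<le> a then 0 else g i + lc g a (i - 1) div 2)"
  by auto
termination by (relation "measure (\<lambda>(g,a,i). i)") auto

function rc :: "(nat \<Rightarrow> nat) \<Rightarrow> nat \<Rightarrow> nat \<Rightarrow> nat" where
  "rc g b i = (if b \<le> i then 0 else g i + rc g b (i + 1) div 2)"
  by auto
termination by (relation "measure (\<lambda>(g,b,i). b - i)") auto

declare lc.simps[simp del] rc.simps[simp del]

lemma lc_le[simp]: "i \<le> a \<Longrightarrow> lc g a i = 0"
  by (simp add: lc.simps)
lemma lc_Suc: "a \<le> i \<Longrightarrow> lc g a (Suc i) = g (Suc i) + lc g a i div 2"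
  by (subst lc.simps) simp
lemma rc_ge[simp]: "b \<le> i \<Longrightarrow> rc g b i = 0"
  by (simp add: rc.simps)
lemma rc_step: "i < b \<Longrightarrow> rc g b i = g i + rc g b (Suc i) div 2"
  by (subst rc.simps) simp

lemma lc_mono: "(\<forall>p. a < p \<and> p \<le> i \<longrightarrow> g p \<le> g' p) \<Longrightarrow> lc g a i \<le> lc g' a i"
proof (induction i)
  case 0 then show ?case by simp
next
  case (Suc i)
  show ?case
  proof (cases "Suc i \<le> a")
    case True then show ?thesis by simp
  next
    case False
    then have "lc g a i \<le> lc g' a i" using Suc by auto
    then have "lc g a i div 2 \<le> lc g' a i div 2" by (rule div_le_mono)
    moreover have "g (Suc i) \<le> g' (Suc i)" using Suc.prems False by auto
    ultimately show ?thesis using False by (simp add: lc_Suc)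
  qed
qed

lemma lc_cong: "(\<forall>p. a < p \<and> p \<le> i \<longrightarrow> g p = g' p) \<Longrightarrow> lc g a i = lc g' a i"
  by (intro antisym lc_mono) auto

lemma rc_mono: "(\<forall>p. i \<le> p \<and> p < b \<longrightarrow> g p \<le> g' p) \<Longrightarrow> rc g b i \<le> rc g' b i"
proof (induction g b i rule: rc.induct)
  case (1 g b i)
  show ?case
  proof (cases "b \<le> i")
    case True then show ?thesis by simp
  next
    case False
    then have "rc g b (i+1) \<le> rc g' b (i+1)" using 1 by auto
    then have "rc g b (Suc i) div 2 \<le> rc g' b (Suc i) div 2" by (simp add: div_le_mono)
    moreover have "g i \<le> g' i" using 1(2) False by auto
    ultimately show ?thesis using False by (simp add: rc_step)
  qed
qed

lemma rc_cong: "(\<forall>p. i \<le> p \<and> p < b \<longrightarrow> g p = g' p) \<Longrightarrow> rc g b i = rc g' b i"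
  by (intro antisym rc_mono) auto

lemma lc_start_mono: "a \<le> a' \<Longrightarrow> lc g a' i \<le> lc g a i"
proof (induction i)
  case 0 then show ?case by simp
next
  case (Suc i)
  show ?case
  proof (cases "Suc i \<le> a'")
    case True then show ?thesis by simp
  next
    case False
    then have "lc g a' i div 2 \<le> lc g a i div 2" using Suc by (simp add: div_le_mono)
    then show ?thesis using False Suc.prems by (simp add: lc_Suc)
  qed
qed

lemma rc_end_mono: "b' \<le> b \<Longrightarrow> rc g b' i \<le> rc g b i"
proof (induction g b' i rule: rc.induct)
  case (1 g b' i)
  show ?case
  proof (cases "b' \<le> i")
    case True then show ?thesis by simp
  next
    case False
    then have "rc g b' (Suc i) div 2 \<le> rc g b (Suc i) div 2" using 1 by (simp add: div_le_mono)
    then show ?thesis using False 1(2) by (simp add: rc_step)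
  qed
qed

lemma lc_reset: "a \<le> b \<Longrightarrow> b < i \<Longrightarrow> lc g a b \<le> 1 \<Longrightarrow> lc g a i = lc g b i"
proof (induction i)
  case 0 then show ?case by simp
next
  case (Suc i)
  show ?case
  proof (cases "b < i")
    case True
    then show ?thesis using Suc by (simp add: lc_Suc)
  next
    case False
    then have "i = b" using Suc.prems by simp
    then show ?thesis using Suc.prems by (simp add: lc_Suc)
  qed
qed

lemma rc_reset: "c \<le> b \<Longrightarrow> i < c \<Longrightarrow> rc g b c \<le> 1 \<Longrightarrow> rc g b i = rc g c i"
proof (induction g c i rule: rc.induct)
  case (1 g c i)
  show ?case
  proof (cases "Suc i < c")
    case True
    then have "rc g b (Suc i) = rc g c (Suc i)" using 1 by auto
    then show ?thesis using 1(2,3) True rc_step[of i b g] rc_step[of i c g] by simp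
  next
    case False
    then have "c = Suc i" using 1 by simp
    then show ?thesis using 1 by (simp add: rc_step)
  qed
qed

lemma lc_weight: "(\<Sum>q\<in>{1..k}. g (a+q) * 2^q) + 1 \<le> 2^k * (lc g a (a+k) + 1)"
proof (induction k)
  case 0 then show ?case by simp
next
  case (Suc k)
  have e: "lc g a (a + Suc k) = g (a + Suc k) + lc g a (a+k) div 2"
    using lc_Suc[of a "a+k" g] by simp
  have d: "lc g a (a+k) \<le> 2 * (lc g a (a+k) div 2) + 1" by linarith
  have "(\<Sum>q\<in>{1..Suc k}. g (a+q) * 2^q) + 1 = (\<Sum>q\<in>{1..k}. g (a+q) * 2^q) + 1 + g (a + Suc k) * 2^Suc k"
    by simp
  also have "\<dots> \<le> 2^k * (lc g a (a+k) + 1) + g (a + Suc k) * 2^Suc k" using Suc by simp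
  also have "\<dots> \<le> 2^k * (2 * (lc g a (a+k) div 2) + 2) + g (a + Suc k) * 2^Suc k"
  proof -
    have "lc g a (a+k) + 1 \<le> 2 * (lc g a (a+k) div 2) + 2" using d by linarith
    then have "2^k * (lc g a (a+k) + 1) \<le> 2^k * (2 * (lc g a (a+k) div 2) + 2)" by (rule mult_left_mono) simp
    then show ?thesis by linarith
  qed
  also have "\<dots> = 2^Suc k * (lc g a (a + Suc k) + 1)" unfolding e by (simp add: algebra_simps)
  finally show ?case .
qed

lemma rc_weight: "k \<le> b \<Longrightarrow> (\<Sum>q\<in>{1..k}. g (b-q) * 2^q) + 1 \<le> 2^k * (rc g b (b-k) + 1)"
proof (induction k)
  case 0 then show ?case by simp
next
  case (Suc k)
  have e: "rc g b (b - Suc k) = g (b - Suc k) + rc g b (b - k) div 2"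
    using rc_step[of "b - Suc k" b g] Suc.prems by (simp add: Suc_diff_Suc)
  have d: "rc g b (b-k) \<le> 2 * (rc g b (b-k) div 2) + 1" by linarith
  have "(\<Sum>q\<in>{1..Suc k}. g (b-q) * 2^q) + 1 = (\<Sum>q\<in>{1..k}. g (b-q) * 2^q) + 1 + g (b - Suc k) * 2^Suc k"
    by simp
  also have "\<dots> \<le> 2^k * (rc g b (b-k) + 1) + g (b - Suc k) * 2^Suc k" using Suc by simp
  also have "\<dots> \<le> 2^k * (2 * (rc g b (b-k) div 2) + 2) + g (b - Suc k) * 2^Suc k"
  proof -
    have "rc g b (b-k) + 1 \<le> 2 * (rc g b (b-k) div 2) + 2" using d by linarith
    then have "2^k * (rc g b (b-k) + 1) \<le> 2^k * (2 * (rc g b (b-k) div 2) + 2)" by (rule mult_left_mono) simp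
    then show ?thesis by linarith
  qed
  also have "\<dots> = 2^Suc k * (rc g b (b - Suc k) + 1)" unfolding e by (simp add: algebra_simps)
  finally show ?case .
qed

lemma lc_zeros: "a \<le> i \<Longrightarrow> (\<forall>p. i < p \<and> p \<le> i + r \<longrightarrow> g p = 0) \<Longrightarrow> lc g a (i+r) = lc g a i div 2^r"
proof (induction r)
  case 0 then show ?case by simp
next
  case (Suc r)
  have "lc g a (i + Suc r) = g (Suc (i + r)) + lc g a (i + r) div 2"
    using lc_Suc[of a "i+r" g] Suc.prems by simp
  also have "\<dots> = lc g a i div 2^r div 2" using Suc by simp
  finally show ?case by (simp only: div_mult2_eq[symmetric] mult.commute power_Suc)
qed

lemma lc_allzero: "(\<forall>p. a < p \<and> p \<le> i \<longrightarrow> g p = 0) \<Longrightarrow> lc g a i = 0"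
proof (induction i)
  case 0 then show ?case by simp
next
  case (Suc i) then show ?case by (cases "Suc i \<le> a") (auto simp: lc_Suc)
qed

lemma rc_zeros: "i + r \<le> b \<Longrightarrow> (\<forall>p. i \<le> p \<and> p < i + r \<longrightarrow> g p = 0) \<Longrightarrow> rc g b i = rc g b (i + r) div 2^r"
proof (induction r arbitrary: i)
  case 0 then show ?case by simp
next
  case (Suc r)
  have "rc g b i = g i + rc g b (Suc i) div 2" using rc_step[of i b g] Suc.prems by simp
  also have "\<dots> = rc g b (Suc i + r) div 2^r div 2"
    using Suc.IH[of "Suc i"] Suc.prems by simp
  finally show ?case by (simp only: div_mult2_eq[symmetric] mult.commute power_Suc add_Suc_shift)
qed

lemma rc_allzero: "(\<forall>p. i \<le> p \<and> p < b \<longrightarrow> g p = 0) \<Longrightarrow> rc g b i = 0"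
proof (induction g b i rule: rc.induct)
  case (1 g b i) then show ?case by (cases "b \<le> i") (auto simp: rc_step)
qed

lemma lc_shift: "lc g s (s+q) = lc (\<lambda>q. g (s+q)) 0 q"
proof (induction q)
  case 0 then show ?case by simp
next
  case (Suc q) then show ?case using lc_Suc[of s "s+q" g] lc_Suc[of 0 q] by simp
qed

lemma rc_shift: "rc g (s+b) (s+i) = rc (\<lambda>q. g (s+q)) b i"
proof (induction "\<lambda>q. g (s+q)" b i rule: rc.induct)
  case (1 b i)
  show ?case
  proof (cases "b \<le> i")
    case True then show ?thesis by simp
  next
    case False then show ?thesis using 1 rc_step[of "s+i" "s+b" g] rc_step[of i b] by simp
  qed
qed


definition phi :: "(nat \<Rightarrow> nat) \<Rightarrow> nat \<Rightarrow> nat \<Rightarrow> nat \<Rightarrow> nat" where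
  "phi g a b h = g h + lc g a (h-1) div 2 + rc g b (h+1) div 2"

lemma lc_prop_up: "j \<le> i \<Longrightarrow> a \<le> j \<Longrightarrow> (\<forall>p. j < p \<and> p \<le> i \<longrightarrow> g' p \<le> g p) \<Longrightarrow> lc g' a j \<le> lc g a j
  \<Longrightarrow> lc g' a i \<le> lc g a i"
proof (induction i)
  case 0 then show ?case by simp
next
  case (Suc i)
  show ?case
  proof (cases "j = Suc i")
    case True then show ?thesis using Suc by simp
  next
    case False
    then have "lc g' a i \<le> lc g a i" using Suc by auto
    then have "lc g' a i div 2 \<le> lc g a i div 2" by (rule div_le_mono)
    moreover have "g' (Suc i) \<le> g (Suc i)" using Suc.prems False by auto
    moreover have "a \<le> i" using Suc.prems False by simp
    ultimately show ?thesis using lc_Suc[of a i g] lc_Suc[of a i g'] by (simp add: add_mono)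
  qed
qed

lemma rc_prop_down: "i \<le> j \<Longrightarrow> (\<forall>p. i \<le> p \<and> p < j \<longrightarrow> g' p \<le> g p) \<Longrightarrow> rc g' b j \<le> rc g b j
  \<Longrightarrow> rc g' b i \<le> rc g b i"
proof (induction "j - i" arbitrary: i)
  case 0 then show ?case by simp
next
  case (Suc k)
  have ij: "Suc i \<le> j" "k = j - Suc i" using Suc.hyps(2) by arith+
  have "rc g' b (Suc i) \<le> rc g b (Suc i)"
    using Suc.hyps(1)[OF ij(2) ij(1)] Suc.prems by auto
  show ?case
  proof (cases "b \<le> i")
    case True then show ?thesis by simp
  next
    case False
    have "g' i \<le> g i" using Suc by auto
    moreover have "rc g' b (Suc i) div 2 \<le> rc g b (Suc i) div 2" using \<open>rc g' b (Suc i) \<le> rc g b (Suc i)\<close> by (rule div_le_mono)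
    ultimately show ?thesis using False rc_step[of i b g] rc_step[of i b g'] by simp
  qed
qed

lemma right_move:
  assumes ax: "a < x" and xb: "Suc x < b" and gx: "2 \<le> g x"
    and g'd: "g' = g(x := g x - 2, Suc x := g (Suc x) + 1)"
  shows "\<forall>h. a < h \<and> h < b \<longrightarrow> phi g' a b h \<le> phi g a b h"
    and "\<forall>i. lc g' a i \<le> lc g a i"
    and "\<forall>i. i \<le> x \<longrightarrow> rc g' b i \<le> rc g b i"
proof -
  have gx': "g' x = g x - 2" "g' (Suc x) = g (Suc x) + 1" using g'd by auto
  have go: "\<And>p. p \<noteq> x \<Longrightarrow> p \<noteq> Suc x \<Longrightarrow> g' p = g p" using g'd by auto
  have l1: "\<And>i. i < x \<Longrightarrow> lc g' a i = lc g a i" by (rule lc_cong) (auto intro!: go)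
  have xs: "x = Suc (x - 1)" "a \<le> x - 1" using ax by auto
  have lgx: "2 \<le> lc g a x" using lc_Suc[of a "x-1" g] xs gx by simp
  have l2: "lc g' a x + 2 = lc g a x"
    using lc_Suc[of a "x-1" g] lc_Suc[of a "x-1" g'] xs l1[of "x-1"] gx' gx by (simp; linarith)
  have l3: "lc g' a i = lc g a i" if "Suc x \<le> i" for i
    using that
  proof (induction i)
    case 0 then show ?case by simp
  next
    case (Suc i)
    show ?case
    proof (cases "i = x")
      case True
      have "lc g' a (Suc x) = g (Suc x) + 1 + (lc g a x - 2) div 2"
        using lc_Suc[of a x g'] ax gx' l2 by simp
      also have "\<dots> = g (Suc x) + lc g a x div 2" using lgx by linarith
      also have "\<dots> = lc g a (Suc x)" using lc_Suc[of a x g] ax by simp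
      finally show ?thesis using True by simp
    next
      case False
      then have "lc g' a i = lc g a i" using Suc by simp
      moreover have "g' (Suc i) = g (Suc i)" using Suc.prems False by (intro go) auto
      ultimately show ?thesis using lc_Suc[of a i g] lc_Suc[of a i g'] Suc.prems ax by simp
    qed
  qed
  show lall: "\<forall>i. lc g' a i \<le> lc g a i"
  proof (intro allI)
    fix i show "lc g' a i \<le> lc g a i"
      using l1[of i] l2 l3[of i] by (cases "i < x"; cases "i = x") auto
  qed
  have r1: "rc g' b i = rc g b i" if "Suc (Suc x) \<le> i" for i
    using that by (intro rc_cong) (auto intro!: go)
  have r2: "rc g' b (Suc x) = rc g b (Suc x) + 1"
    using rc_step[of "Suc x" b g] rc_step[of "Suc x" b g'] xb gx' r1[of "Suc (Suc x)"] by simp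
  have r3: "rc g' b x + 1 \<le> rc g b x"
  proof -
    have "rc g' b x = g x - 2 + (rc g b (Suc x) + 1) div 2"
      using rc_step[of x b g'] xb gx' r2 by simp
    moreover have "rc g b x = g x + rc g b (Suc x) div 2" using rc_step[of x b g] xb by simp
    ultimately show ?thesis using gx by linarith
  qed
  have r4: "rc g' b i \<le> rc g b i" if "i \<le> x" for i
    using rc_prop_down[of i x g' g b] that r3 go by auto
  show "\<forall>i. i \<le> x \<longrightarrow> rc g' b i \<le> rc g b i" using r4 by auto
  show "\<forall>h. a < h \<and> h < b \<longrightarrow> phi g' a b h \<le> phi g a b h"
  proof (intro allI impI)
    fix h assume h: "a < h \<and> h < b"
    consider "h < x" | "h = x" | "h = Suc x" | "Suc x < h" by linarith
    then show "phi g' a b h \<le> phi g a b h"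
    proof cases
      case 1
      have "rc g' b (h+1) div 2 \<le> rc g b (h+1) div 2" using r4[of "h+1"] 1 by (simp add: div_le_mono)
      then show ?thesis using 1 l1[of "h-1"] go[of h] unfolding phi_def by simp
    next
      case 2
      have "(rc g b (x+1) + 1) div 2 \<le> rc g b (x+1) div 2 + 1" by linarith
      then show ?thesis using 2 l1[of "x-1"] gx' r2 gx ax unfolding phi_def by (simp; linarith)
    next
      case 3
      have "(lc g a x - 2) div 2 = lc g a x div 2 - 1" using lgx by linarith
      then show ?thesis using 3 l2 gx' r1[of "Suc (Suc x)"] lgx unfolding phi_def by simp
    next
      case 4
      then show ?thesis using l3[of "h-1"] r1[of "h+1"] go[of h] unfolding phi_def by simp
    qed
  qed
qed


lemma left_move:
  assumes ax: "a < x" and xb: "Suc x < b" and gx: "2 \<le> g (Suc x)"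
    and g'd: "g' = g(Suc x := g (Suc x) - 2, x := g x + 1)"
  shows "\<forall>h. a < h \<and> h < b \<longrightarrow> phi g' a b h \<le> phi g a b h"
    and "\<forall>i. Suc x \<le> i \<longrightarrow> lc g' a i \<le> lc g a i"
    and "\<forall>i. rc g' b i \<le> rc g b i"
proof -
  have gx': "g' (Suc x) = g (Suc x) - 2" "g' x = g x + 1" using g'd by auto
  have go: "\<And>p. p \<noteq> x \<Longrightarrow> p \<noteq> Suc x \<Longrightarrow> g' p = g p" using g'd by auto
  have r1: "rc g' b i = rc g b i" if "Suc (Suc x) \<le> i" for i
    using that by (intro rc_cong) (auto intro!: go)
  have rgx: "2 \<le> rc g b (Suc x)" using rc_step[of "Suc x" b g] xb gx by simp
  have r2: "rc g' b (Suc x) + 2 = rc g b (Suc x)"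
    using rc_step[of "Suc x" b g] rc_step[of "Suc x" b g'] xb gx' r1[of "Suc (Suc x)"] gx by (simp; linarith)
  have r3x: "rc g' b x = rc g b x"
  proof -
    have "rc g' b x = g x + 1 + (rc g b (Suc x) - 2) div 2"
      using rc_step[of x b g'] xb gx' r2 by (simp; linarith)
    also have "\<dots> = g x + rc g b (Suc x) div 2" using rgx by linarith
    also have "\<dots> = rc g b x" using rc_step[of x b g] xb by simp
    finally show ?thesis .
  qed
  have r3: "rc g' b i = rc g b i" if "i \<le> x" for i
  proof (rule antisym)
    show "rc g' b i \<le> rc g b i" using rc_prop_down[of i x g' g b] that r3x go by auto
    show "rc g b i \<le> rc g' b i" using rc_prop_down[of i x g g' b] that r3x go by auto
  qed
  show "\<forall>i. rc g' b i \<le> rc g b i"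
  proof (intro allI)
    fix i show "rc g' b i \<le> rc g b i"
      using r1[of i] r2 r3[of i] by (cases "i \<le> x"; cases "i = Suc x") auto
  qed
  have l1: "\<And>i. i < x \<Longrightarrow> lc g' a i = lc g a i" by (rule lc_cong) (auto intro!: go)
  have xs: "x = Suc (x - 1)" "a \<le> x - 1" using ax by auto
  have l2: "lc g' a x = lc g a x + 1"
    using lc_Suc[of a "x-1" g] lc_Suc[of a "x-1" g'] xs l1[of "x-1"] gx' by simp
  have l3: "lc g' a (Suc x) + 1 \<le> lc g a (Suc x)"
  proof -
    have "lc g' a (Suc x) = g (Suc x) - 2 + (lc g a x + 1) div 2"
      using lc_Suc[of a x g'] ax gx' l2 by simp
    moreover have "lc g a (Suc x) = g (Suc x) + lc g a x div 2" using lc_Suc[of a x g] ax by simp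
    ultimately show ?thesis using gx by linarith
  qed
  have l4: "lc g' a i \<le> lc g a i" if "Suc x \<le> i" for i
    using lc_prop_up[of "Suc x" i a g' g] that l3 go ax by auto
  show "\<forall>i. Suc x \<le> i \<longrightarrow> lc g' a i \<le> lc g a i" using l4 by auto
  show "\<forall>h. a < h \<and> h < b \<longrightarrow> phi g' a b h \<le> phi g a b h"
  proof (intro allI impI)
    fix h assume h: "a < h \<and> h < b"
    consider "h < x" | "h = x" | "h = Suc x" | "Suc x < h" by linarith
    then show "phi g' a b h \<le> phi g a b h"
    proof cases
      case 1
      then show ?thesis using l1[of "h-1"] r3[of "h+1"] go[of h] unfolding phi_def by simp
    next
      case 2
      have "(rc g b (x+1) - 2) div 2 = rc g b (x+1) div 2 - 1" using rgx by linarith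
      then show ?thesis using 2 l1[of "x-1"] gx' r2 rgx ax unfolding phi_def by (simp; linarith)
    next
      case 3
      have "(lc g a x + 1) div 2 \<le> lc g a x div 2 + 1" by linarith
      then show ?thesis using 3 l2 gx' gx r1[of "Suc (Suc x)"] unfolding phi_def by (simp; linarith)
    next
      case 4
      have "lc g' a (h-1) div 2 \<le> lc g a (h-1) div 2" using l4[of "h-1"] 4 by (simp add: div_le_mono)
      then show ?thesis using 4 r1[of "h+1"] go[of h] unfolding phi_def by simp
    qed
  qed
qed


definition gv :: "(jvert \<Rightarrow> nat) \<Rightarrow> nat \<Rightarrow> nat" where
  "gv D = (\<lambda>i. D (V i))"

definition Good :: "nat \<Rightarrow> nat \<Rightarrow> (jvert \<Rightarrow> nat) \<Rightarrow> bool" where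
  "Good n m D = (D U = 0 \<and> (\<forall>i\<le>n. D (V i) = 0) \<and> (\<forall>i. n*m \<le> i \<longrightarrow> D (V i) = 0) \<and>
     (\<forall>h. n < h \<and> h < n*m \<and> n dvd h \<longrightarrow> phi (gv D) n (n*m) h \<le> 1) \<and>
     lc (gv D) n (n*m - 1) div 2 = 0 \<and> rc (gv D) (n*m) (n+1) div 2 = 0)"

lemma lc_ge_self: "a < i \<Longrightarrow> g i \<le> lc g a i"
  using lc_Suc[of a "i-1" g] by (cases i) auto

lemma rc_ge_self: "i < b \<Longrightarrow> g i \<le> rc g b i"
  using rc_step[of i b g] by simp

lemma Good_pres:
  assumes n2: "2 \<le> n" and m3: "3 \<le> m" and G: "Good n m D" and mv: "pmove n m D D'"
  shows "Good n m D'"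
proof -
  let ?N = "n*m"
  from mv obtain x y where adj: "jadj n m x y" and dx: "2 \<le> D x" and D'd: "D' = (D(x := D x - 2))(y := D y + 1)"
    unfolding pmove_def by blast
  have DU: "D U = 0" and Dlo: "\<And>i. i \<le> n \<Longrightarrow> D (V i) = 0" and Dhi: "\<And>i. ?N \<le> i \<Longrightarrow> D (V i) = 0"
    and Dphi: "\<And>h. n < h \<Longrightarrow> h < ?N \<Longrightarrow> n dvd h \<Longrightarrow> phi (gv D) n ?N h \<le> 1"
    and Dl: "lc (gv D) n (?N - 1) div 2 = 0" and Dr: "rc (gv D) ?N (n+1) div 2 = 0"
    using G unfolding Good_def by auto
  obtain i where xi: "x = V i" using DU dx by (cases x) auto
  have ilo: "n < i" using Dlo[of i] dx xi by (cases "i \<le> n") auto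
  have ihi: "i < ?N" using Dhi[of i] dx xi by (cases "?N \<le> i") auto
  have gi: "2 \<le> gv D i" using dx xi unfolding gv_def by simp
  show ?thesis
  proof (cases y)
    case U
    then have "n dvd i" using adj xi unfolding jadj_def by simp
    then have "phi (gv D) n ?N i \<le> 1" using Dphi ilo ihi by simp
    then show ?thesis using gi unfolding phi_def by simp
  next
    case (V k)
    have kN: "k < ?N" and ik: "i \<noteq> k" and kk: "k = (i + 1) mod ?N \<or> i = (k + 1) mod ?N"
      using adj xi V unfolding jadj_def by auto
    have D'U: "D' U = 0" using D'd DU xi V by simp
    have D'lo: "\<forall>p\<le>n. D' (V p) = 0" and D'hi: "\<forall>p. ?N \<le> p \<longrightarrow> D' (V p) = 0"
      if "n < k" using D'd Dlo Dhi xi V ilo ihi that kN by auto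
    from kk show ?thesis
    proof
      assume k1: "k = (i + 1) mod ?N"
      show ?thesis
      proof (cases "i + 1 < ?N")
        case False
        then have "i = ?N - 1" using ihi by simp
        then have "2 \<le> lc (gv D) n (?N - 1)" using lc_ge_self[of n i "gv D"] ilo gi by simp
        then show ?thesis using Dl by simp
      next
        case True
        then have k: "k = Suc i" using k1 by simp
        have g': "gv D' = (gv D)(i := gv D i - 2, Suc i := gv D (Suc i) + 1)"
          unfolding gv_def using D'd xi V k by (auto simp: fun_eq_iff)
        note RM = right_move[OF ilo _ gi g'] 
        have RM1: "\<forall>h. n < h \<and> h < ?N \<longrightarrow> phi (gv D') n ?N h \<le> phi (gv D) n ?N h"
          using RM(1) True by simp
        have "lc (gv D') n (?N - 1) \<le> lc (gv D) n (?N - 1)" using RM(2) True by blast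
        then have e1: "lc (gv D') n (?N - 1) div 2 = 0" using Dl div_le_mono by (metis le_zero_eq)
        have "rc (gv D') ?N (n+1) \<le> rc (gv D) ?N (n+1)" using RM(3) True ilo by auto
        then have e2: "rc (gv D') ?N (n+1) div 2 = 0" using Dr div_le_mono by (metis le_zero_eq)
        have P: "\<forall>h. n < h \<and> h < ?N \<and> n dvd h \<longrightarrow> phi (gv D') n ?N h \<le> 1"
        proof (intro allI impI)
          fix h assume h: "n < h \<and> h < ?N \<and> n dvd h"
          show "phi (gv D') n ?N h \<le> 1" using RM1 Dphi h le_trans by blast
        qed
        have "n < k" using ilo k by simp
        then show ?thesis unfolding Good_def using D'U D'lo[OF \<open>n < k\<close>] D'hi[OF \<open>n < k\<close>] e1 e2 P by blast
      qed
    next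
      assume k2: "i = (k + 1) mod ?N"
      have k: "i = Suc k"
      proof (cases "k + 1 < ?N")
        case True then show ?thesis using k2 by simp
      next
        case False then have "k + 1 = ?N" using kN by simp
        then show ?thesis using k2 ilo by simp
      qed
      show ?thesis
      proof (cases "n < k")
        case False
        then have "k = n" using k ilo by simp
        then have "2 \<le> rc (gv D) ?N (n+1)" using rc_ge_self[of i ?N "gv D"] ihi gi k by simp
        then show ?thesis using Dr by simp
      next
        case True
        have g': "gv D' = (gv D)(Suc k := gv D (Suc k) - 2, k := gv D k + 1)"
          unfolding gv_def using D'd xi V k by (auto simp: fun_eq_iff)
        note LM = left_move[OF True _ _ g'] 
        have RM1: "\<forall>h. n < h \<and> h < ?N \<longrightarrow> phi (gv D') n ?N h \<le> phi (gv D) n ?N h"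
          using LM(1) ihi gi k by simp
        have "lc (gv D') n (?N - 1) \<le> lc (gv D) n (?N - 1)" using LM(2) ihi gi k by auto
        then have e1: "lc (gv D') n (?N - 1) div 2 = 0" using Dl div_le_mono by (metis le_zero_eq)
        have "rc (gv D') ?N (n+1) \<le> rc (gv D) ?N (n+1)" using LM(3) ihi gi k by auto
        then have e2: "rc (gv D') ?N (n+1) div 2 = 0" using Dr div_le_mono by (metis le_zero_eq)
        have P: "\<forall>h. n < h \<and> h < ?N \<and> n dvd h \<longrightarrow> phi (gv D') n ?N h \<le> 1"
        proof (intro allI impI)
          fix h assume h: "n < h \<and> h < ?N \<and> n dvd h"
          show "phi (gv D') n ?N h \<le> 1" using RM1 Dphi h le_trans by blast
        qed
        show ?thesis unfolding Good_def using D'U D'lo[OF True] D'hi[OF True] e1 e2 P by blast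
      qed
    qed
  qed
qed


lemma jadj_irrefl: "jadj n m x y \<Longrightarrow> x \<noteq> y"
  unfolding jadj_def by (cases x; cases y) auto

lemma moves:
  assumes adj: "jadj n m x y" and k: "2*k \<le> D x"
  shows "(pmove n m)\<^sup>*\<^sup>* D (D(x := D x - 2*k, y := D y + k))"
  using k
proof (induction k)
  case 0 then show ?case by simp
next
  case (Suc k)
  have xy: "x \<noteq> y" using jadj_irrefl[OF adj] .
  have "2*k \<le> D x" using Suc.prems by simp
  then have IH: "(pmove n m)\<^sup>*\<^sup>* D (D(x := D x - 2*k, y := D y + k))" by (rule Suc.IH)
  have st: "pmove n m (D(x := D x - 2*k, y := D y + k)) (D(x := D x - 2*Suc k, y := D y + Suc k))"
  proof -
    let ?Dk = "D(x := D x - 2*k, y := D y + k)"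
    have e1: "?Dk x = D x - 2*k" using xy by simp
    have e2: "?Dk y = D y + k" by simp
    have "2*k + 2 \<le> D x" using Suc.prems by simp
    then have c2: "2 \<le> ?Dk x" unfolding e1 by linarith
    have c3: "D(x := D x - 2*Suc k, y := D y + Suc k) = (?Dk(x := ?Dk x - 2))(y := ?Dk y + 1)"
      unfolding e1 e2
    proof (rule ext)
      fix z show "(D(x := D x - 2*Suc k, y := D y + Suc k)) z = ((?Dk(x := D x - 2*k - 2))(y := D y + k + 1)) z"
        using xy by (cases "z = x"; cases "z = y") auto
    qed
    show ?thesis unfolding pmove_def using adj c2 c3 by blast
  qed
  show ?case using rtranclp.rtrancl_into_rtrancl[of "pmove n m" D "D(x := D x - 2*k, y := D y + k)", OF IH st] .
qed
lemma Good_rtrancl: "(pmove n m)\<^sup>*\<^sup>* D D' \<Longrightarrow> 2 \<le> n \<Longrightarrow> 3 \<le> m \<Longrightarrow> Good n m D \<Longrightarrow> Good n m D'"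
  by (induction rule: rtranclp_induct) (auto intro: Good_pres)

lemma Good_unreach:
  assumes "2 \<le> n" "3 \<le> m" "Good n m D"
  shows "\<not> reachable n m D U" "\<not> reachable n m D (V 0)" "\<not> reachable n m D (V n)"
proof -
  have "\<And>D'. (pmove n m)\<^sup>*\<^sup>* D D' \<Longrightarrow> D' U = 0 \<and> D' (V 0) = 0 \<and> D' (V n) = 0"
  proof -
    fix D' assume "(pmove n m)\<^sup>*\<^sup>* D D'"
    then have "Good n m D'" using Good_rtrancl assms by blast
    then show "D' U = 0 \<and> D' (V 0) = 0 \<and> D' (V n) = 0" unfolding Good_def by simp
  qed
  then show "\<not> reachable n m D U" "\<not> reachable n m D (V 0)" "\<not> reachable n m D (V n)"
    unfolding reachable_def by fastforce+
qed

lemma adj_up: "Suc i < n*m \<Longrightarrow> jadj n m (V i) (V (Suc i))"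
  unfolding jadj_def by simp
lemma adj_down: "Suc i < n*m \<Longrightarrow> jadj n m (V (Suc i)) (V i)"
  unfolding jadj_def by simp
lemma adj_wrap: assumes "2 \<le> n*m" shows "jadj n m (V (n*m - 1)) (V 0)"
proof -
  have e: "Suc (n*m - 1) = n*m" using assms by simp
  have "0 < n*m" using assms by linarith
  then have "0 < n" "0 < m" by auto
  with e show ?thesis unfolding jadj_def using assms by simp
qed
lemma adj_hub: "h < n*m \<Longrightarrow> n dvd h \<Longrightarrow> jadj n m (V h) U"
  unfolding jadj_def by simp

lemma push_left:
  assumes "a \<le> i" "i < n*m"
  shows "\<exists>D'. (pmove n m)\<^sup>*\<^sup>* D D' \<and> lc (gv D) a i \<le> D' (V i) \<and> (\<forall>y. y \<notin> V ` {a<..i} \<longrightarrow> D y \<le> D' y)"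
  using assms
proof (induction i)
  case 0 then show ?case by auto
next
  case (Suc i)
  show ?case
  proof (cases "a = Suc i")
    case True then show ?thesis by auto
  next
    case False
    then have ai: "a \<le> i" using Suc.prems by simp
    then obtain Da where Da: "(pmove n m)\<^sup>*\<^sup>* D Da" "lc (gv D) a i \<le> Da (V i)"
      "\<forall>y. y \<notin> V ` {a<..i} \<longrightarrow> D y \<le> Da y" using Suc by auto
    let ?k = "lc (gv D) a i div 2"
    have "2 * ?k \<le> Da (V i)" using Da(2) by linarith
    then have mv: "(pmove n m)\<^sup>*\<^sup>* Da (Da(V i := Da (V i) - 2*?k, V (Suc i) := Da (V (Suc i)) + ?k))"
      using moves[OF adj_up[OF Suc.prems(2)]] by blast
    let ?Db = "Da(V i := Da (V i) - 2*?k, V (Suc i) := Da (V (Suc i)) + ?k)"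
    have "V (Suc i) \<notin> V ` {a<..i}" by auto
    then have f: "D (V (Suc i)) \<le> Da (V (Suc i))" using Da(3) by blast
    show ?thesis
    proof (intro exI conjI allI impI)
      show "(pmove n m)\<^sup>*\<^sup>* D ?Db" using rtranclp_trans[of "pmove n m" D Da ?Db, OF Da(1) mv] .
      show "lc (gv D) a (Suc i) \<le> ?Db (V (Suc i))"
        using lc_Suc[of a i "gv D"] ai f unfolding gv_def by simp
      fix y assume yn: "y \<notin> V ` {a<..Suc i}"
      then have y1: "y \<noteq> V (Suc i)" "y \<notin> V ` {a<..i}" using ai False by auto
      show "D y \<le> ?Db y"
      proof (cases "y = V i")
        case True
        then have "a = i" using yn ai by (cases "a = i") auto
        then show ?thesis using Da(3) y1 True by simp
      next
        case False
        then show ?thesis using Da(3) y1 by simp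
      qed
    qed
  qed
qed

lemma push_right:
  assumes "i \<le> b" "b \<le> n*m"
  shows "\<exists>D'. (pmove n m)\<^sup>*\<^sup>* D D' \<and> rc (gv D) b i \<le> D' (V i) \<and> (\<forall>y. y \<notin> V ` {i..<b} \<longrightarrow> D y \<le> D' y)"
  using assms
proof (induction "b - i" arbitrary: i)
  case 0 then show ?case by auto
next
  case (Suc k)
  show ?case
  proof (cases "Suc i = b")
    case True
    have "rc (gv D) b i = D (V i)" using rc_step[of i b "gv D"] True unfolding gv_def by simp
    then show ?thesis by auto
  next
    case False
    then have ib: "Suc i < b" "k = b - Suc i" using Suc by auto
    then obtain Da where Da: "(pmove n m)\<^sup>*\<^sup>* D Da" "rc (gv D) b (Suc i) \<le> Da (V (Suc i))"
      "\<forall>y. y \<notin> V ` {Suc i..<b} \<longrightarrow> D y \<le> Da y"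
      using Suc.hyps(1)[of "Suc i", OF ib(2)] ib(1) Suc.prems(2) by auto
    let ?k = "rc (gv D) b (Suc i) div 2"
    have "2 * ?k \<le> Da (V (Suc i))" using Da(2) by linarith
    have mv: "(pmove n m)\<^sup>*\<^sup>* Da (Da(V (Suc i) := Da (V (Suc i)) - 2*?k, V i := Da (V i) + ?k))"
    proof -
      have "Suc i < n*m" using ib Suc.prems by simp
      then show ?thesis using moves[OF adj_down[of i n m]] \<open>2 * ?k \<le> Da (V (Suc i))\<close> by blast
    qed
    let ?Db = "Da(V (Suc i) := Da (V (Suc i)) - 2*?k, V i := Da (V i) + ?k)"
    have "V i \<notin> V ` {Suc i..<b}" by auto
    then have f: "D (V i) \<le> Da (V i)" using Da(3) by blast
    show ?thesis
    proof (intro exI conjI allI impI)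
      show "(pmove n m)\<^sup>*\<^sup>* D ?Db" using rtranclp_trans[of "pmove n m" D Da ?Db, OF Da(1) mv] .
      show "rc (gv D) b i \<le> ?Db (V i)"
        using rc_step[of i b "gv D"] ib f unfolding gv_def by simp
      fix y assume "y \<notin> V ` {i..<b}"
      then have "y \<noteq> V i" "y \<noteq> V (Suc i)" "y \<notin> V ` {Suc i..<b}" using ib by auto
      then show "D y \<le> ?Db y" using Da(3) by simp
    qed
  qed
qed



lemma reach_trans: "(pmove n m)\<^sup>*\<^sup>* D Da \<Longrightarrow> reachable n m Da t \<Longrightarrow> reachable n m D t"
  unfolding reachable_def by (meson rtranclp_trans)

lemma reach_move: assumes "jadj n m x t" "2 \<le> D x" shows "reachable n m D t"
proof -
  have "(pmove n m)\<^sup>*\<^sup>* D (D(x := D x - 2*1, t := D t + 1))" using moves[of n m x t 1 D] assms by simp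
  moreover have "x \<noteq> t" using jadj_irrefl[OF assms(1)] .
  ultimately show ?thesis unfolding reachable_def by force
qed

lemma hub_reach:
  assumes ah: "a < h" and hb: "h + 1 < b" and bN: "b \<le> n*m" and dv: "n dvd h"
    and big: "2 \<le> D (V h) + lc (gv D) a (h-1) div 2 + rc (gv D) b (h+1) div 2"
  shows "reachable n m D U"
proof -
  obtain h' where hh: "h = Suc h'" using ah by (cases h) auto
  have ah': "a \<le> h'" using ah hh by simp
  obtain Da where Da: "(pmove n m)\<^sup>*\<^sup>* D Da" "lc (gv D) a h' \<le> Da (V h')"
    "\<forall>y. y \<notin> V ` {a<..h'} \<longrightarrow> D y \<le> Da y"
    using push_left[of a h' n m D] ah' hh hb bN by auto
  let ?k1 = "lc (gv D) a h' div 2"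
  let ?Db = "Da(V h' := Da (V h') - 2*?k1, V h := Da (V h) + ?k1)"
  have mv1: "(pmove n m)\<^sup>*\<^sup>* Da ?Db"
    using moves[of n m "V h'" "V h" ?k1 Da] adj_up[of h' n m] hh hb bN Da(2) by auto
  have "V h \<notin> V ` {a<..h'}" using hh by auto
  then have fh: "D (V h) \<le> Da (V h)" using Da(3) by blast
  have Dbh: "?Db (V h) = Da (V h) + ?k1" by simp
  obtain Dc where Dc: "(pmove n m)\<^sup>*\<^sup>* ?Db Dc" "rc (gv ?Db) b (h+1) \<le> Dc (V (h+1))"
    "\<forall>y. y \<notin> V ` {h+1..<b} \<longrightarrow> ?Db y \<le> Dc y"
    using push_right[of "h+1" b n m ?Db] hb bN by auto
  have "rc (gv D) b (h+1) \<le> rc (gv ?Db) b (h+1)"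
  proof (rule rc_mono, intro allI impI)
    fix p assume p: "h + 1 \<le> p \<and> p < b"
    then have "V p \<notin> V ` {a<..h'}" "V p \<noteq> V h'" "V p \<noteq> V h" using hh by auto
    then show "gv D p \<le> gv ?Db p" unfolding gv_def using Da(3) by simp
  qed
  then have c2: "rc (gv D) b (h+1) \<le> Dc (V (h+1))" using Dc(2) by linarith
  have "V h \<notin> V ` {h+1..<b}" by auto
  then have fc: "?Db (V h) \<le> Dc (V h)" using Dc(3) by blast
  let ?k2 = "rc (gv D) b (h+1) div 2"
  let ?Dd = "Dc(V (Suc h) := Dc (V (Suc h)) - 2*?k2, V h := Dc (V h) + ?k2)"
  have mv2: "(pmove n m)\<^sup>*\<^sup>* Dc ?Dd"
    using moves[of n m "V (Suc h)" "V h" ?k2 Dc] adj_down[of h n m] hb bN c2 by auto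
  have "?Dd (V h) = Dc (V h) + ?k2" by simp
  then have "2 \<le> ?Dd (V h)" using big fc fh Dbh hh by simp
  then have "reachable n m ?Dd U" using reach_move[of n m "V h" U] adj_hub[of h n m] dv hb bN by simp
  then show ?thesis using reach_trans[OF Da(1)] reach_trans[OF mv1] reach_trans[OF Dc(1)] reach_trans[OF mv2]
    by blast
qed

lemma left_end_reach:
  assumes nb: "n + 1 < b" and bN: "b \<le> n*m" and big: "2 \<le> rc (gv D) b (n+1)"
  shows "reachable n m D (V n)"
proof -
  obtain Da where Da: "(pmove n m)\<^sup>*\<^sup>* D Da" "rc (gv D) b (n+1) \<le> Da (V (n+1))"
    using push_right[of "n+1" b n m D] nb bN by auto
  have "reachable n m Da (V n)" using reach_move[of n m "V (Suc n)" "V n" Da] adj_down[of n n m] nb bN Da(2) big by simp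
  then show ?thesis using reach_trans[OF Da(1)] by blast
qed

lemma right_end_reach:
  assumes aN: "a < n*m - 1" and big: "2 \<le> lc (gv D) a (n*m - 1)"
  shows "reachable n m D (V 0)"
proof -
  obtain Da where Da: "(pmove n m)\<^sup>*\<^sup>* D Da" "lc (gv D) a (n*m - 1) \<le> Da (V (n*m - 1))"
  proof -
    have "n*m - 1 < n*m" using aN by linarith
    then show ?thesis using push_left[of a "n*m - 1" n m D] aN that by auto
  qed
  have "2 \<le> n*m" using aN by linarith
  then have "reachable n m Da (V 0)" using reach_move[of n m "V (n*m - 1)" "V 0" Da] adj_wrap[of n m] Da(2) big by simp
  then show ?thesis using reach_trans[OF Da(1)] by blast
qed


lemma pow2_mod3: "(2::nat)^j mod 3 = 1 \<or> (2::nat)^j mod 3 = 2"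
proof (induction j)
  case 0 then show ?case by simp
next
  case (Suc j)
  have "(2::nat)^Suc j mod 3 = (2 * (2^j mod 3)) mod 3" by (simp add: mod_mult_right_eq)
  then show ?case using Suc by auto
qed

lemma w_even: "p \<le> 2*k \<Longrightarrow> (2::nat)^(k+1) \<le> 2^p + 2^(2*k - p)"
proof (cases "p \<le> k")
  case True
  show ?thesis
  proof (cases "p = k")
    case True then show ?thesis by (simp add: mult_2)
  next
    case False
    then have "k + 1 \<le> 2*k - p" using True by simp
    then have "(2::nat)^(k+1) \<le> 2^(2*k - p)" by (rule power_increasing) simp
    then show ?thesis by simp
  qed
next
  case False
  then have "k + 1 \<le> p" by simp
  then have "(2::nat)^(k+1) \<le> 2^p" by (rule power_increasing) simp
  then show ?thesis by simp
qed

lemma cyc: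
  fixes e pos :: "'i \<Rightarrow> nat"
  assumes fin: "finite I" and L2: "2 \<le> L" and posL: "\<forall>i\<in>I. pos i < L"
    and X: "(\<Sum>i\<in>I. e i * 2^(pos i)) < 2^L"
    and Y: "(\<Sum>i\<in>I. e i * 2^(L - pos i)) < 2^L"
  shows "(\<Sum>i\<in>I. e i) + 1 \<le> fC L"
proof (cases "even L")
  case True
  then obtain k where Lk: "L = 2*k" by blast
  have fc: "fC L = 2^k" unfolding fC_def using True Lk by simp
  have "(\<Sum>i\<in>I. e i * 2^(k+1)) \<le> (\<Sum>i\<in>I. e i * 2^(pos i) + e i * 2^(L - pos i))"
  proof (rule sum_mono)
    fix i assume "i \<in> I"
    then have "pos i \<le> 2*k" using posL Lk by auto
    then have "2^(k+1) \<le> (2::nat)^(pos i) + 2^(L - pos i)" using w_even[of "pos i" k] Lk by simp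
    then show "e i * 2^(k+1) \<le> e i * 2^(pos i) + e i * 2^(L - pos i)"
      by (metis add_mult_distrib2 mult_le_mono2)
  qed
  also have "\<dots> < 2^L + 2^L" using X Y by (simp add: sum.distrib)
  also have "\<dots> = 2^(k+1) * 2^k"
  proof -
    have "(2::nat)^L = 2^k * 2^k" by (simp only: Lk mult_2 power_add)
    then show ?thesis by simp
  qed
  finally have "(\<Sum>i\<in>I. e i) * 2^(k+1) < 2^k * 2^(k+1)" by (simp add: sum_distrib_right mult.commute)
  then have "(\<Sum>i\<in>I. e i) < 2^k" by simp
  then show ?thesis using fc by simp
next
  case False
  then obtain k where Lk: "L = 2*k + 1" using oddE by blast
  have k1: "1 \<le> k" using L2 Lk by simp
  have fc: "fC L = 2 * (2^(k+1) div 3) + 1" unfolding fC_def using False Lk by simp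
  define a where "a i = (if pos i = k then e i else 0)" for i
  define b where "b i = (if pos i = k + 1 then e i else 0)" for i
  define c where "c i = (if pos i \<noteq> k \<and> pos i \<noteq> k + 1 then e i else 0)" for i
  have sum_e: "(\<Sum>i\<in>I. e i) = (\<Sum>i\<in>I. a i) + (\<Sum>i\<in>I. b i) + (\<Sum>i\<in>I. c i)"
    unfolding sum.distrib[symmetric] by (rule sum.cong) (auto simp: a_def b_def c_def)
  have "(\<Sum>i\<in>I. 2^k * (a i + 2 * b i)) \<le> (\<Sum>i\<in>I. e i * 2^(pos i))"
  proof (rule sum_mono)
    fix i assume "i \<in> I"
    show "2^k * (a i + 2 * b i) \<le> e i * 2^(pos i)"
      unfolding a_def b_def by auto
  qed
  moreover have "(\<Sum>i\<in>I. 2^k * (a i + 2 * b i)) = 2^k * ((\<Sum>i\<in>I. a i) + 2 * (\<Sum>i\<in>I. b i))"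
    by (simp add: sum.distrib sum_distrib_left sum_distrib_right algebra_simps)
  moreover have L2k: "(2::nat)^L = 2^k * 2^(k+1)"
  proof -
    have "(2::nat)^(2*k) = 2^k * 2^k" by (simp only: mult_2 power_add)
    then show ?thesis using Lk by simp
  qed
  ultimately have XA: "2^k * ((\<Sum>i\<in>I. a i) + 2 * (\<Sum>i\<in>I. b i)) < 2^k * 2^(k+1)"
    using X by linarith
  have "(\<Sum>i\<in>I. 2^k * (2 * a i + b i)) \<le> (\<Sum>i\<in>I. e i * 2^(L - pos i))"
  proof (rule sum_mono)
    fix i assume "i \<in> I"
    show "2^k * (2 * a i + b i) \<le> e i * 2^(L - pos i)"
      unfolding a_def b_def using Lk by auto
  qed
  moreover have "(\<Sum>i\<in>I. 2^k * (2 * a i + b i)) = 2^k * (2 * (\<Sum>i\<in>I. a i) + (\<Sum>i\<in>I. b i))"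
    by (simp add: sum.distrib sum_distrib_left sum_distrib_right algebra_simps)
  ultimately have YA: "2^k * (2 * (\<Sum>i\<in>I. a i) + (\<Sum>i\<in>I. b i)) < 2^k * 2^(k+1)"
    using Y L2k by linarith
  have "(\<Sum>i\<in>I. 2^k * (3 * a i + 3 * b i + 4 * c i)) \<le> (\<Sum>i\<in>I. e i * 2^(pos i) + e i * 2^(L - pos i))"
  proof (rule sum_mono)
    fix i assume iI: "i \<in> I"
    have pl: "pos i < L" using posL iI by simp
    have w: "2^k * (3 * a i + 3 * b i + 4 * c i) \<le> e i * (2^(pos i) + 2^(L - pos i))"
    proof (cases "pos i = k \<or> pos i = k + 1")
      case True
      then show ?thesis unfolding a_def b_def c_def using Lk k1
        by (auto simp: algebra_simps power_add)
    next
      case F: False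
      have "4 * 2^k \<le> (2::nat)^(pos i) + 2^(L - pos i)"
      proof (cases "pos i < k")
        case True
        then have "k + 2 \<le> L - pos i" using Lk by simp
        then have "(2::nat)^(k+2) \<le> 2^(L - pos i)" by (rule power_increasing) simp
        then show ?thesis by (simp add: power_add)
      next
        case False
        then have "k + 2 \<le> pos i" using F by simp
        then have "(2::nat)^(k+2) \<le> 2^(pos i)" by (rule power_increasing) simp
        then show ?thesis by (simp add: power_add)
      qed
      then have "e i * (4 * 2^k) \<le> e i * (2^(pos i) + 2^(L - pos i))" by (rule mult_le_mono2)
      then show ?thesis unfolding a_def b_def c_def using F by (simp add: algebra_simps)
    qed
    then show "2^k * (3 * a i + 3 * b i + 4 * c i) \<le> e i * 2^(pos i) + e i * 2^(L - pos i)"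
      by (simp add: algebra_simps)
  qed
  also have "\<dots> < 2^L + 2^L" using X Y by (simp add: sum.distrib)
  also have "\<dots> = 2^k * 2^(k+2)" using L2k by simp
  finally have ZA0: "(\<Sum>i\<in>I. 2^k * (3 * a i + 3 * b i + 4 * c i)) < 2^k * 2^(k+2)" .
  have "(\<Sum>i\<in>I. 2^k * (3 * a i + 3 * b i + 4 * c i)) = 2^k * (3 * (\<Sum>i\<in>I. a i) + 3 * (\<Sum>i\<in>I. b i) + 4 * (\<Sum>i\<in>I. c i))"
    by (simp add: sum.distrib sum_distrib_left sum_distrib_right algebra_simps)
  then have ZA: "2^k * (3 * (\<Sum>i\<in>I. a i) + 3 * (\<Sum>i\<in>I. b i) + 4 * (\<Sum>i\<in>I. c i)) < 2^k * 2^(k+2)"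
    using ZA0 by simp
  define A where "A = (\<Sum>i\<in>I. a i)"
  define B where "B = (\<Sum>i\<in>I. b i)"
  define C where "C = (\<Sum>i\<in>I. c i)"
  define T where "T = (2::nat)^(k+1)"
  have h1: "A + 2*B < T" using XA unfolding A_def B_def T_def by simp
  have h2: "2*A + B < T" using YA unfolding A_def B_def T_def by simp
  have h3: "3*A + 3*B + 4*C < 2*T" using ZA unfolding A_def B_def C_def T_def by (simp add: power_add)
  have r: "T mod 3 = 1 \<or> T mod 3 = 2" unfolding T_def by (rule pow2_mod3)
  define q where "q = T div 3"
  define rr where "rr = T mod 3"
  have tq: "T = 3 * q + rr" unfolding q_def rr_def by simp
  have r': "rr = 1 \<or> rr = 2" using r unfolding rr_def .
  have s3: "3*(A+B+C) + 2 \<le> 2*T"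
  proof (cases "C = 0")
    case True then show ?thesis using h1 h2 by simp
  next
    case False then show ?thesis using h3 by simp
  qed
  then have "3*(A+B+C) \<le> 6*q + 2" using tq r' by auto
  then have "A + B + C \<le> 2 * q" by presburger
  then have "A + B + C \<le> 2 * (T div 3)" unfolding q_def .
  then show ?thesis using sum_e fc unfolding A_def B_def C_def T_def by simp
qed


lemma seg_bound:
  fixes g :: "nat \<Rightarrow> nat"
  assumes n2: "2 \<le> n" and cL1: "cL \<le> 1" and cR1: "cR \<le> 1"
    and hL: "rc g (s+n) (s+1) \<le> 2*cL + 1" and hR: "lc g s (s+n-1) \<le> 2*cR + 1"
  shows "(\<Sum>q\<in>{1..<n}. g (s+q)) + 1 \<le> fC (n + cL + cR)"
proof -
  have iv: "{1..n-1} = {1..<n}" using n2 by auto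
  have pn: "(2::nat)^n = 2 * 2^(n-1)" using n2 by (metis power_Suc Suc_diff_1 le_less_trans less_numeral_extra(1) one_less_numeral_iff semiring_norm(76) le_less)
  have X0: "(\<Sum>q\<in>{1..<n}. g (s+q) * 2^q) + 1 \<le> 2^n * (cR + 1)"
  proof -
    have "(\<Sum>q\<in>{1..n-1}. g (s+q) * 2^q) + 1 \<le> 2^(n-1) * (lc g s (s+(n-1)) + 1)" by (rule lc_weight)
    also have "s + (n-1) = s + n - 1" using n2 by simp
    also have "2^(n-1) * (lc g s (s+n-1) + 1) \<le> 2^(n-1) * (2*cR + 2)" using hR by (intro mult_left_mono) auto
    also have "\<dots> = 2^n * (cR + 1)" using pn by simp
    finally show ?thesis using iv by simp
  qed
  have Y0: "(\<Sum>q\<in>{1..<n}. g (s+q) * 2^(n-q)) + 1 \<le> 2^n * (cL + 1)"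
  proof -
    have "(\<Sum>q\<in>{1..n-1}. g (s+n-q) * 2^q) + 1 \<le> 2^(n-1) * (rc g (s+n) (s+n-(n-1)) + 1)"
      by (rule rc_weight) simp
    also have "s + n - (n-1) = s + 1" using n2 by simp
    also have "2^(n-1) * (rc g (s+n) (s+1) + 1) \<le> 2^(n-1) * (2*cL + 2)" using hL by (intro mult_left_mono) auto
    also have "\<dots> = 2^n * (cL + 1)" using pn by simp
    also have "(\<Sum>q\<in>{1..n-1}. g (s+n-q) * 2^q) = (\<Sum>q\<in>{1..n-1}. g (s+q) * 2^(n-q))"
    proof -
      have "(\<Sum>q\<in>{1..n-1}. g (s+n-q) * 2^q) = (\<Sum>i\<in>{1..n-1}. g (s+n-(n-1+1-i)) * 2^(n-1+1-i))"
        by (rule sum.atLeastAtMost_rev)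
      also have "\<dots> = (\<Sum>q\<in>{1..n-1}. g (s+q) * 2^(n-q))"
        by (rule sum.cong) (use n2 in auto)
      finally show ?thesis .
    qed
    finally show ?thesis using iv by simp
  qed
  have pc: "(cR + 1) = 2^cR" "(cL + 1) = 2^cL" using cL1 cR1 by (auto simp: le_Suc_eq)
  have "(\<Sum>q\<in>{1..<n}. g (s+q)) + 1 \<le> fC (n + cL + cR)"
  proof (rule cyc)
    show "finite {1..<n}" by simp
    show "2 \<le> n + cL + cR" using n2 by simp
    show "\<forall>i\<in>{1..<n}. i + cL < n + cL + cR" by auto
    have "(\<Sum>q\<in>{1..<n}. g (s+q) * 2^(q + cL)) = 2^cL * (\<Sum>q\<in>{1..<n}. g (s+q) * 2^q)"
      by (simp add: sum_distrib_left power_add algebra_simps)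
    also have "\<dots> < 2^cL * (2^n * (cR + 1))" using X0 by simp
    also have "\<dots> = 2^(n + cL + cR)" using pc by (simp add: power_add)
    finally show "(\<Sum>q\<in>{1..<n}. g (s+q) * 2^(q + cL)) < 2^(n + cL + cR)" .
    have "(\<Sum>q\<in>{1..<n}. g (s+q) * 2^(n + cL + cR - (q + cL))) = 2^cR * (\<Sum>q\<in>{1..<n}. g (s+q) * 2^(n-q))"
      unfolding sum_distrib_left
    proof (rule sum.cong)
      fix q assume "q \<in> {1..<n}"
      then have "n + cL + cR - (q + cL) = (n - q) + cR" by simp
      then show "g (s+q) * 2^(n + cL + cR - (q + cL)) = 2^cR * (g (s+q) * 2^(n-q))"
        by (simp add: power_add)
    qed simp
    also have "\<dots> < 2^cR * (2^n * (cL + 1))" using Y0 by simp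
    also have "\<dots> = 2^(n + cL + cR)" using pc by (simp add: power_add)
    finally show "(\<Sum>q\<in>{1..<n}. g (s+q) * 2^(n + cL + cR - (q + cL))) < 2^(n + cL + cR)" .
  qed
  then show ?thesis .
qed


lemma div3a: "(6*(q::nat) + 2) div 3 = 2*q" by presburger
lemma div3b: "(6*(q::nat) + 4) div 3 = 2*q+1" by presburger

lemma arith_even: "2*P = 3*q + r \<Longrightarrow> r = 1 \<or> r = 2 \<Longrightarrow> 2 \<le> (P::nat) \<Longrightarrow>
   P + 1 \<le> 2*q + 1 \<and> (2*q+1) - P \<le> (2*P) - (2*q+1) \<and> 2*q+1 \<le> 2*P"
proof -
  assume h: "2*P = 3*q + r" "r = 1 \<or> r = 2" "2 \<le> P"
  show ?thesis
  proof (cases "r = 1")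
    case True then show ?thesis using h by arith
  next
    case False
    then have r2: "r = 2" using h by simp
    have "q \<noteq> 1" using h r2 by presburger
    moreover have "q \<noteq> 0" using h r2 by simp
    ultimately have "2 \<le> q" by simp
    then show ?thesis using h r2 by arith
  qed
qed

lemma arith_odd: "T = 3*q + r \<Longrightarrow> r = 1 \<or> r = 2 \<Longrightarrow> 4 \<le> (T::nat) \<Longrightarrow>
   2*q+1+1 \<le> T \<and> T - (2*q+1) \<le> (2*((2*T) div 3)+1) - T \<and> T \<le> 2*((2*T) div 3) + 1"
proof -
  assume h: "T = 3*q + r" "r = 1 \<or> r = 2" "4 \<le> T"
  show ?thesis
  proof (cases "r = 1")
    case True
    then have "2*T = 6*q + 2" using h by simp
    then have "(2*T) div 3 = 2*q" using div3a by simp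
    then show ?thesis using h True by arith
  next
    case False
    then have "r = 2" using h by simp
    then have "2*T = 6*q + 4" using h by simp
    then have "(2*T) div 3 = 2*q + 1" using div3b by simp
    then show ?thesis using h \<open>r = 2\<close> by arith
  qed
qed

lemma fC_facts:
  assumes n2: "2 \<le> n"
  shows "1 \<le> fC n" "fC n + 1 \<le> fC (n+1)" "fC (n+1) - fC n \<le> fC (n+2) - fC (n+1)" "fC (n+1) \<le> fC (n+2)"
proof -
  have all: "1 \<le> fC n \<and> fC n + 1 \<le> fC (n+1) \<and> fC (n+1) - fC n \<le> fC (n+2) - fC (n+1) \<and> fC (n+1) \<le> fC (n+2)"
  proof (cases "even n")
    case True
    then obtain k where nk: "n = 2*k" by blast
    have k1: "1 \<le> k" using n2 nk by simp
    define P where "P = (2::nat)^k"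
    define T where "T = (2::nat)^(k+1)"
    have TP: "T = 2*P" unfolding T_def P_def by simp
    have "(2::nat)^1 \<le> 2^k" by (rule power_increasing) (use k1 in simp_all)
    then have P2: "2 \<le> P" unfolding P_def by simp
    have f0: "fC n = P" unfolding fC_def P_def using nk by simp
    have f1: "fC (n+1) = 2*(T div 3) + 1" unfolding fC_def T_def using nk by simp
    have f2: "fC (n+2) = T" unfolding fC_def T_def using nk by simp
    have r: "T mod 3 = 1 \<or> T mod 3 = 2" unfolding T_def by (rule pow2_mod3)
    have "2*P = 3*(T div 3) + T mod 3" using TP by simp
    from arith_even[OF this r P2] have "P + 1 \<le> 2 * (T div 3) + 1 \<and> 2 * (T div 3) + 1 - P \<le> 2 * P - (2 * (T div 3) + 1) \<and> 2 * (T div 3) + 1 \<le> 2 * P" .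
    then show ?thesis unfolding f0 f1 f2 TP using P2 by linarith
  next
    case False
    then obtain k where nk: "n = 2*k+1" using oddE by blast
    have k1: "1 \<le> k" using n2 nk by simp
    define T where "T = (2::nat)^(k+1)"
    have "(2::nat)^2 \<le> 2^(k+1)" by (rule power_increasing) (use k1 in simp_all)
    then have T4: "4 \<le> T" unfolding T_def by simp
    have f0: "fC n = 2*(T div 3) + 1" unfolding fC_def T_def using nk by simp
    have f1: "fC (n+1) = T" unfolding fC_def T_def using nk by simp
    have e2: "(2::nat)^(k+2) = 2*T" unfolding T_def by simp
    have n2e: "n + 2 = 2*(k+1) + 1" using nk by simp
    have "fC (2*(k+1) + 1) = 2*(2^(k+1+1) div 3) + 1" unfolding fC_def by simp
    then have f2: "fC (n+2) = 2*((2*T) div 3) + 1" using n2e e2 by simp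
    have r: "T mod 3 = 1 \<or> T mod 3 = 2" unfolding T_def by (rule pow2_mod3)
    have "T = 3*(T div 3) + T mod 3" by simp
    from arith_odd[OF this r T4] show ?thesis unfolding f0 f1 f2 by linarith
  qed
  then show "1 \<le> fC n" "fC n + 1 \<le> fC (n+1)" "fC (n+1) - fC n \<le> fC (n+2) - fC (n+1)" "fC (n+1) \<le> fC (n+2)"
    by auto
qed

lemma shift_cR: "3 \<le> m \<Longrightarrow> (\<Sum>j\<in>{1..<m}. (cR::nat\<Rightarrow>nat) j) = (\<Sum>j\<in>{2..<m}. cR (j-1)) + cR (m-1)"
proof -
  assume m3: "3 \<le> m"
  have "{1..<m} = {1..<m-1} \<union> {m-1}" using m3 by auto
  then have "(\<Sum>j\<in>{1..<m}. cR j) = (\<Sum>j\<in>{1..<m-1}. cR j) + cR (m-1)" by simp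
  moreover have "(\<Sum>j\<in>{2..<m}. cR (j-1)) = (\<Sum>j\<in>{1..<m-1}. cR j)"
  proof -
    have e1: "{2..<m} = {1+1..<(m-1)+1}" using m3 by (simp add: numeral_2_eq_2)
    have "(\<Sum>j\<in>{1+1..<(m-1)+1}. cR (j-1)) = (\<Sum>j\<in>{1..<m-1}. cR (j+1-1))"
      by (rule sum.shift_bounds_nat_ivl)
    then show ?thesis unfolding e1 by simp
  qed
  ultimately show ?thesis by simp
qed

lemma agg:
  fixes S hb cL cR :: "nat \<Rightarrow> nat"
  assumes m3: "3 \<le> m"
    and Sb: "\<forall>j\<in>{1..<m}. S j \<le> e0 + d1*(cL j + cR j) + (d2 - d1)*((cL j + cR j) div 2)"
    and hub: "\<forall>j\<in>{2..<m}. hb j + cR (j-1) + cL j \<le> 1"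
    and e: "cL 1 = 0" "cR (m-1) = 0" "hb 1 = 0"
    and d: "1 \<le> d1" "d1 \<le> d2"
  shows "(\<Sum>j\<in>{1..<m}. hb j + S j) \<le> (m-1)*e0 + d1*(m-2) + (d2-d1)*((m-2) div 2)"
proof -
  define U where "U = (\<Sum>j\<in>{1..<m}. hb j + (cL j + cR j))"
  define K where "K = (\<Sum>j\<in>{1..<m}. (cL j + cR j) div 2)"
  have "(\<Sum>j\<in>{1..<m}. hb j + S j) \<le> (\<Sum>j\<in>{1..<m}. e0 + d1*(hb j + (cL j + cR j)) + (d2 - d1)*((cL j + cR j) div 2))"
  proof (rule sum_mono)
    fix j assume j: "j \<in> {1..<m}"
    have h1: "hb j \<le> d1 * hb j" using d by simp
    have h2: "S j \<le> e0 + d1*(cL j + cR j) + (d2 - d1)*((cL j + cR j) div 2)" using Sb j by blast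
    have h3: "d1*(hb j + (cL j + cR j)) = d1 * hb j + d1*(cL j + cR j)" by (rule add_mult_distrib2)
    show "hb j + S j \<le> e0 + d1*(hb j + (cL j + cR j)) + (d2 - d1)*((cL j + cR j) div 2)"
      unfolding h3 using h1 h2 by linarith
  qed
  also have "\<dots> = (m-1)*e0 + d1*U + (d2-d1)*K"
  proof -
    have "(\<Sum>j\<in>{1..<m}. e0 + d1*(hb j + (cL j + cR j)) + (d2 - d1)*((cL j + cR j) div 2))
      = (\<Sum>j\<in>{1..<m}. e0) + (\<Sum>j\<in>{1..<m}. d1*(hb j + (cL j + cR j))) + (\<Sum>j\<in>{1..<m}. (d2 - d1)*((cL j + cR j) div 2))"
      by (simp add: sum.distrib)
    also have "(\<Sum>j\<in>{1..<m}. d1*(hb j + (cL j + cR j))) = d1 * U" unfolding U_def by (rule sum_distrib_left[symmetric])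
    also have "(\<Sum>j\<in>{1..<m}. (d2 - d1)*((cL j + cR j) div 2)) = (d2-d1) * K" unfolding K_def by (rule sum_distrib_left[symmetric])
    also have "(\<Sum>j\<in>{1..<m}. e0) = (m-1)*e0" by simp
    finally show ?thesis .
  qed
  finally have s1: "(\<Sum>j\<in>{1..<m}. hb j + S j) \<le> (m-1)*e0 + d1*U + (d2-d1)*K" .
  have Ueq: "U = (\<Sum>j\<in>{2..<m}. hb j + cL j + cR (j-1))"
  proof -
    have "U = (\<Sum>j\<in>{1..<m}. hb j + cL j) + (\<Sum>j\<in>{1..<m}. cR j)"
      unfolding U_def by (simp add: sum.distrib add.assoc)
    also have "(\<Sum>j\<in>{1..<m}. hb j + cL j) = (\<Sum>j\<in>{2..<m}. hb j + cL j)"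
    proof -
      have "{1..<m} = insert 1 {2..<m}" using m3 by auto
      then show ?thesis using e by simp
    qed
    also have "(\<Sum>j\<in>{1..<m}. cR j) = (\<Sum>j\<in>{2..<m}. cR (j-1))" using shift_cR[OF m3, of cR] e by simp
    finally show ?thesis by (simp add: sum.distrib)
  qed
  have U2: "U \<le> m - 2"
  proof -
    have "U \<le> (\<Sum>j\<in>{2..<m}. (1::nat))" unfolding Ueq
    proof (rule sum_mono)
      fix j assume "j \<in> {2..<m}"
      then have "hb j + cR (j-1) + cL j \<le> 1" using hub by blast
      then show "hb j + cL j + cR (j-1) \<le> 1" by simp
    qed
    then show ?thesis by simp
  qed
  have "2*K \<le> (\<Sum>j\<in>{1..<m}. cL j + cR j)" unfolding K_def sum_distrib_left
    by (rule sum_mono) simp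
  also have "\<dots> \<le> U" unfolding U_def by (rule sum_mono) simp
  finally have "2*K \<le> m - 2" using U2 by simp
  then have K2: "K \<le> (m-2) div 2" by linarith
  have "d1*U \<le> d1*(m-2)" using U2 by simp
  moreover have "(d2-d1)*K \<le> (d2-d1)*((m-2) div 2)" using K2 by simp
  ultimately show ?thesis using s1 by linarith
qed

lemma alpha_eq:
  assumes n2: "2 \<le> n" and m3: "3 \<le> m"
    and f: "1 \<le> fC n" "fC n + 1 \<le> fC (n+1)" "fC (n+1) - fC n \<le> fC (n+2) - fC (n+1)" "fC (n+1) \<le> fC (n+2)"
  shows "int ((m-1)*(fC n - 1) + (fC (n+1) - fC n)*(m-2) + ((fC (n+2) - fC (n+1)) - (fC (n+1) - fC n))*((m-2) div 2)) = alpha n m"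
proof -
  define F0 where "F0 = int (fC n)"
  define F1 where "F1 = int (fC (n+1))"
  define F2 where "F2 = int (fC (n+2))"
  have c: "int ((m-1)*(fC n - 1) + (fC (n+1) - fC n)*(m-2) + ((fC (n+2) - fC (n+1)) - (fC (n+1) - fC n))*((m-2) div 2))
     = (int m - 1)*(F0 - 1) + (F1 - F0)*(int m - 2) + ((F2 - F1) - (F1 - F0)) * int ((m-2) div 2)"
    using f m3 unfolding F0_def F1_def F2_def by (simp add: of_nat_diff)
  show ?thesis
  proof (cases "even m")
    case True
    then obtain M where mM: "m = 2*M" by blast
    have a: "alpha n m = int M * (F0 + F2 - 2) - F2 + 1"
      unfolding alpha_def F0_def F2_def using True mM by simp
    have "(m-2) div 2 = M - 1" using mM by simp
    moreover have "1 \<le> M" using mM m3 by simp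
    ultimately have hM: "int ((m-2) div 2) = int M - 1" by simp
    show ?thesis unfolding c a hM using mM by (simp add: algebra_simps)
  next
    case False
    then obtain M where mM: "m = 2*M + 1" using oddE by blast
    have a: "alpha n m = int M * (F0 + F2 - 2) + F1 - F2"
      unfolding alpha_def F0_def F1_def F2_def using False mM by simp
    have "(m-2) div 2 = M - 1" using mM by simp
    moreover have "1 \<le> M" using mM m3 by simp
    ultimately have hM: "int ((m-2) div 2) = int M - 1" by simp
    show ?thesis unfolding c a hM using mM by (simp add: algebra_simps)
  qed
qed


lemma blk: "(\<Sum>i\<in>{a..<a+n}. g i) = (\<Sum>q<n. (g::nat\<Rightarrow>nat) (a+q))"
  by (induction n) auto

lemma blocks: "(\<Sum>i<n*m. (g::nat\<Rightarrow>nat) i) = (\<Sum>j<m. (\<Sum>q<n. g (j*n+q)))"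
proof -
  have "(\<Sum>i<m*n. g i) = (\<Sum>j<m. (\<Sum>i\<in>{j*n..<j*n+n}. g i))" by (rule sum.nat_group[symmetric])
  then show ?thesis by (simp add: blk mult.commute)
qed

lemma dsize_eq: "D U = 0 \<Longrightarrow> dsize n m D = (\<Sum>i<n*m. D (V i))"
proof -
  assume DU: "D U = 0"
  have "dsize n m D = D U + (\<Sum>x\<in>V ` {..<n*m}. D x)"
    unfolding dsize_def jvertices_def by (subst sum.insert) auto
  also have "(\<Sum>x\<in>V ` {..<n*m}. D x) = (\<Sum>i<n*m. D (V i))"
    by (subst sum.reindex) (auto simp: inj_on_def)
  finally show ?thesis using DU by simp
qed


lemma seg_val:
  assumes "S + 1 \<le> fC (n + c)" "c \<le> 2" "1 \<le> fC n" "fC n + 1 \<le> fC (n+1)"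
    "fC (n+1) - fC n \<le> fC (n+2) - fC (n+1)" "fC (n+1) \<le> fC (n+2)"
  shows "S \<le> (fC n - 1) + (fC (n+1) - fC n)*c + ((fC (n+2) - fC (n+1)) - (fC (n+1) - fC n))*(c div 2)"
proof -
  have "c = 0 \<or> c = 1 \<or> c = 2" using assms(2) by auto
  then show ?thesis
  proof (elim disjE)
    assume "c = 0" then show ?thesis using assms by simp
  next
    assume "c = 1" then show ?thesis using assms by simp
  next
    assume c2: "c = 2"
    then have "S + 1 \<le> fC (n+2)" using assms(1) by simp
    then show ?thesis using c2 assms(3-6) by simp
  qed
qed

lemma upper:
  assumes n2: "2 \<le> n" and m3: "3 \<le> m" and gd: "good_dist n m D"
  shows "int (dsize n m D) \<le> alpha n m"
proof -
  define g where "g = gv D"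
  have lo: "\<forall>i\<le>n. D (V i) = 0" and nU: "\<not> reachable n m D U"
    and n0: "\<not> reachable n m D (V 0)" and nn: "\<not> reachable n m D (V n)"
    using gd unfolding good_dist_def by auto
  have DU: "D U = 0"
  proof (rule ccontr)
    assume "D U \<noteq> 0" then have "reachable n m D U" unfolding reachable_def by auto
    with nU show False ..
  qed
  define cL where "cL j = rc g (j*n + n) (j*n + 1) div 2" for j
  define cR where "cR j = lc g (j*n) (j*n + n - 1) div 2" for j
  define hb where "hb j = g (j*n)" for j
  define S where "S j = (\<Sum>q\<in>{1..<n}. g (j*n + q))" for j
  have mn: "(m-1)*n + n = n*m" using m3 by (cases m) (auto simp: algebra_simps)
  have hubc: "hb j + cR (j-1) + cL j \<le> 1" if j: "j \<in> {2..<m}" for j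
  proof -
    obtain j' where jj: "j = Suc j'" using j by (cases j) auto
    have a1: "j'*n < j'*n + n" "j'*n + n + 1 < j'*n + n + n" using n2 by auto
    have "j + 1 \<le> m" using j by simp
    then have "(j+1)*n \<le> m*n" by (rule mult_le_mono1)
    then have a2: "j'*n + n + n \<le> n*m" using jj by (simp add: algebra_simps)
    have a3: "n dvd j'*n + n" by simp
    have "\<not> 2 \<le> D (V (j'*n + n)) + lc (gv D) (j'*n) (j'*n + n - 1) div 2 + rc (gv D) (j'*n + n + n) (j'*n + n + 1) div 2"
      using hub_reach[OF a1(1) a1(2) a2 a3, of D] nU by auto
    then show ?thesis unfolding hb_def cR_def cL_def g_def using jj by (simp add: algebra_simps gv_def)
  qed
  have cL1: "cL 1 = 0"
  proof -
    have "n + 1 < n + n" "n + n \<le> n*m" using n2 m3 by (auto simp: mult_2_right[symmetric] intro: mult_le_mono2)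
    then have "\<not> 2 \<le> rc (gv D) (n + n) (n+1)" using left_end_reach[of n "n+n" m D] nn by auto
    then show ?thesis unfolding cL_def g_def by simp
  qed
  have cRm: "cR (m-1) = 0"
  proof -
    have e: "(m-1)*n + n - 1 = n*m - 1" using mn by simp
    have "(m-1)*n < n*m - 1" using mn n2 by linarith
    then have "\<not> 2 \<le> lc (gv D) ((m-1)*n) (n*m - 1)" using right_end_reach[of "(m-1)*n" n m D] n0 by auto
    then show ?thesis unfolding cR_def g_def e by simp
  qed
  have hb1: "hb 1 = 0" unfolding hb_def g_def gv_def using lo by simp
  have cL_le: "cL j \<le> 1" if "j \<in> {1..<m}" for j
  proof (cases "j = 1")
    case True then show ?thesis using cL1 by simp
  next
    case False then have "j \<in> {2..<m}" using that by auto
    then show ?thesis using hubc[of j] by simp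
  qed
  have cR_le: "cR j \<le> 1" if "j \<in> {1..<m}" for j
  proof (cases "j = m - 1")
    case True then show ?thesis using cRm by simp
  next
    case False then have "Suc j \<in> {2..<m}" using that by auto
    then show ?thesis using hubc[of "Suc j"] by simp
  qed
  note fcf = fC_facts[OF n2]
  have Sb: "\<forall>j\<in>{1..<m}. S j \<le> (fC n - 1) + (fC (n+1) - fC n)*(cL j + cR j)
      + ((fC (n+2) - fC (n+1)) - (fC (n+1) - fC n))*((cL j + cR j) div 2)"
  proof
    fix j assume j: "j \<in> {1..<m}"
    have "S j + 1 \<le> fC (n + cL j + cR j)" unfolding S_def
    proof (rule seg_bound[OF n2 cL_le[OF j] cR_le[OF j]])
      show "rc g (j*n + n) (j*n + 1) \<le> 2 * cL j + 1" unfolding cL_def by linarith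
      show "lc g (j*n) (j*n + n - 1) \<le> 2 * cR j + 1" unfolding cR_def by linarith
    qed
    then have "S j + 1 \<le> fC (n + (cL j + cR j))" by (simp add: add.assoc)
    moreover have "cL j + cR j \<le> 2" using cL_le[OF j] cR_le[OF j] by simp
    ultimately show "S j \<le> (fC n - 1) + (fC (n+1) - fC n)*(cL j + cR j)
      + ((fC (n+2) - fC (n+1)) - (fC (n+1) - fC n))*((cL j + cR j) div 2)"
      using seg_val fcf by blast
  qed
  have A: "(\<Sum>j\<in>{1..<m}. hb j + S j) \<le> (m-1)*(fC n - 1) + (fC (n+1) - fC n)*(m-2)
      + ((fC (n+2) - fC (n+1)) - (fC (n+1) - fC n))*((m-2) div 2)"
  proof (rule agg[OF m3 Sb])
    show "\<forall>j\<in>{2..<m}. hb j + cR (j-1) + cL j \<le> 1" using hubc by blast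
    show "cL 1 = 0" "cR (m-1) = 0" "hb 1 = 0" by (fact cL1, fact cRm, fact hb1)
    show "1 \<le> fC (n+1) - fC n" using fcf by simp
    show "fC (n+1) - fC n \<le> fC (n+2) - fC (n+1)" using fcf by simp
  qed
  have tot: "dsize n m D = (\<Sum>j\<in>{1..<m}. hb j + S j)"
  proof -
    have "dsize n m D = (\<Sum>j<m. (\<Sum>q<n. g (j*n+q)))" using dsize_eq[where D=D and n=n and m=m, OF DU] blocks[where g=g and n=n and m=m]
      unfolding g_def gv_def by simp
    also have "\<dots> = (\<Sum>j\<in>{1..<m}. (\<Sum>q<n. g (j*n+q)))"
    proof -
      have "{..<m} = insert 0 {1..<m}" using m3 by auto
      moreover have "(\<Sum>q<n. g (0*n+q)) = 0" using lo unfolding g_def gv_def by simp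
      ultimately show ?thesis by simp
    qed
    also have "\<dots> = (\<Sum>j\<in>{1..<m}. hb j + S j)"
    proof (rule sum.cong)
      fix j
      have "{..<n} = insert 0 {1..<n}" using n2 by auto
      then show "(\<Sum>q<n. g (j*n+q)) = hb j + S j" unfolding hb_def S_def by simp
    qed simp
    finally show ?thesis .
  qed
  show ?thesis using A alpha_eq[OF n2 m3 fcf] tot by linarith
qed


lemma LG:
  fixes g cL cR :: "nat \<Rightarrow> nat"
  assumes n2: "2 \<le> n" and m3: "3 \<le> m"
    and hL: "\<forall>j\<in>{1..<m}. rc g (j*n+n) (j*n+1) div 2 \<le> cL j"
    and hR: "\<forall>j\<in>{1..<m}. lc g (j*n) (j*n+n-1) div 2 \<le> cR j"
    and hub: "\<forall>j\<in>{2..<m}. g (j*n) + cR (j-1) + cL j \<le> 1"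
    and e: "cL 1 = 0" "cR (m-1) = 0"
  shows "(\<forall>h. n < h \<and> h < n*m \<and> n dvd h \<longrightarrow> phi g n (n*m) h \<le> 1)
     \<and> lc g n (n*m - 1) div 2 = 0 \<and> rc g (n*m) (n+1) div 2 = 0"
proof -
  have reL: "lc g n (j*n + n - 1) = lc g (j*n) (j*n + n - 1)" if "lc g n (j*n) \<le> 1" "1 \<le> j" for j
  proof (rule lc_reset)
    show "n \<le> j*n" using that(2) by simp
    show "j*n < j*n + n - 1" using n2 by simp
  qed (fact that(1))
  have L: "lc g n (j*n) \<le> 1" if "1 \<le> j" "j < m" for j
    using that
  proof (induction j)
    case 0 then show ?case by simp
  next
    case (Suc j)
    show ?case
    proof (cases "j = 0")
      case True then show ?thesis by simp
    next
      case False
      then have IH: "lc g n (j*n) \<le> 1" using Suc by simp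
      have e1: "Suc j * n = Suc (j*n + n - 1)" using n2 by simp
      have "lc g n (Suc j * n) = g (Suc j * n) + lc g n (j*n + n - 1) div 2"
      proof -
        have "n \<le> j*n" using False by simp
        then have "n \<le> j*n + n - 1" by linarith
        then show ?thesis unfolding e1 by (subst lc_Suc) (auto simp: e1[symmetric])
      qed
      also have "lc g n (j*n + n - 1) = lc g (j*n) (j*n + n - 1)" using reL IH False by simp
      also have "g (Suc j * n) + lc g (j*n) (j*n + n - 1) div 2 \<le> g (Suc j * n) + cR j + cL (Suc j)"
      proof -
        have "j \<in> {1..<m}" using Suc.prems False by auto
        then have "lc g (j*n) (j*n + n - 1) div 2 \<le> cR j" using hR by blast
        then show ?thesis by linarith
      qed
      also have "\<dots> \<le> 1"
      proof -
        have "Suc j \<in> {2..<m}" using Suc.prems False by auto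
        then show ?thesis using hub by fastforce
      qed
      finally show ?thesis .
    qed
  qed
  have reR: "rc g (n*m) (j*n + 1) = rc g (j*n + n) (j*n + 1)" if "rc g (n*m) (j*n + n) \<le> 1" "j + 1 \<le> m" for j
  proof (rule rc_reset)
    have "(j+1)*n \<le> m*n" using that(2) by (rule mult_le_mono1)
    then show "j*n + n \<le> n*m" by (simp add: algebra_simps)
    show "j*n + 1 < j*n + n" using n2 by simp
  qed (fact that(1))
  have R: "rc g (n*m) (j*n) \<le> 1" if "2 \<le> j" "j \<le> m" for j
    using that
  proof (induction "m - j" arbitrary: j)
    case 0 then have "j = m" by simp
    then show ?case by (simp add: mult.commute)
  next
    case (Suc k)
    then have jm: "j < m" "k = m - Suc j" by auto
    have IH: "rc g (n*m) (Suc j * n) \<le> 1" using Suc.hyps(1)[OF jm(2)] Suc.prems jm by simp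
    have jn: "j*n < n*m" using jm(1) n2 by (simp add: mult.commute)
    have "rc g (n*m) (j*n) = g (j*n) + rc g (n*m) (Suc (j*n)) div 2" by (rule rc_step[OF jn])
    also have "rc g (n*m) (Suc (j*n)) = rc g (j*n + n) (j*n + 1)" using reR[of j] IH jm by (simp add: add.commute)
    also have "g (j*n) + rc g (j*n + n) (j*n + 1) div 2 \<le> g (j*n) + cR (j-1) + cL j"
    proof -
      have "j \<in> {1..<m}" using Suc.prems jm by auto
      then have "rc g (j*n + n) (j*n + 1) div 2 \<le> cL j" using hL by blast
      then show ?thesis by linarith
    qed
    also have "\<dots> \<le> 1"
    proof -
      have "j \<in> {2..<m}" using Suc.prems jm by auto
      then show ?thesis using hub by blast
    qed
    finally show ?case .
  qed
  have P: "phi g n (n*m) h \<le> 1" if h: "n < h" "h < n*m" "n dvd h" for h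
  proof -
    obtain j where hj: "h = j*n" using h(3) unfolding dvd_def by (auto simp: mult.commute)
    have j2: "2 \<le> j" using h(1) hj n2 by (cases j; cases "j - 1") auto
    have jm: "j < m" using h(2) hj by (simp add: mult.commute)
    obtain j' where jj: "j = Suc j'" using j2 by (cases j) auto
    have j'1: "1 \<le> j'" using j2 jj by simp
    have hm1: "h - 1 = j'*n + n - 1" using hj jj by simp
    have lcl: "lc g n (h - 1) div 2 \<le> cR j'"
      using reL[of j'] L[of j'] j'1 jj jm hR hm1 by simp
    have R1: "rc g (n*m) (j*n + n) \<le> 1" using R[of "Suc j"] j2 jm by (simp add: add.commute)
    have R2: "rc g (n*m) (j*n+1) = rc g (j*n+n) (j*n+1)" using reR[of j] R1 jm by simp
    have "j \<in> {1..<m}" using j2 jm by auto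
    then have "rc g (j*n+n) (j*n+1) div 2 \<le> cL j" using hL by blast
    then have rcl: "rc g (n*m) (h + 1) div 2 \<le> cL j" using R2 hj by simp
    have "j \<in> {2..<m}" using j2 jm by auto
    then have "g (j*n) + cR (j-1) + cL j \<le> 1" using hub by blast
    then have "g h + cR j' + cL j \<le> 1" using jj hj by simp
    then show ?thesis unfolding phi_def using lcl rcl by linarith
  qed
  have E1: "lc g n (n*m - 1) div 2 = 0"
  proof -
    have mn: "(m-1)*n + n = n*m" using m3 by (cases m) (auto simp: algebra_simps)
    have "lc g n ((m-1)*n + n - 1) = lc g ((m-1)*n) ((m-1)*n + n - 1)" using reL[of "m-1"] L[of "m-1"] m3 by simp
    moreover have "m - 1 \<in> {1..<m}" using m3 by auto
    then have "lc g ((m-1)*n) ((m-1)*n + n - 1) div 2 \<le> cR (m-1)" using hR by blast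
    moreover have "n*m - 1 = (m-1)*n + n - 1" using mn by simp
    ultimately show ?thesis using e(2) by simp
  qed
  have E2: "rc g (n*m) (n+1) div 2 = 0"
  proof -
    have "rc g (n*m) (2*n) \<le> 1" using R[of 2] m3 by simp
    then have "rc g (n*m) (1*n + n) \<le> 1" by (simp add: mult_2)
    then have "rc g (n*m) (1*n + 1) = rc g (1*n + n) (1*n + 1)" using reR[of 1] m3 by simp
    moreover have "(1::nat) \<in> {1..<m}" using m3 by auto
    then have "rc g (1*n+n) (1*n+1) div 2 \<le> cL 1" using hL by blast
    ultimately show ?thesis using e(1) by simp
  qed
  show ?thesis using P E1 E2 by blast
qed


lemma spike1_lc:
  assumes "1 \<le> p" "p \<le> r" "\<forall>q. 0 < q \<and> q \<le> r \<and> q \<noteq> p \<longrightarrow> e q = 0"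
  shows "lc e 0 r = e p div 2^(r-p)"
proof -
  have z: "lc e 0 (p-1) = 0" by (rule lc_allzero) (use assms in auto)
  have "lc e 0 p = e p" using lc_Suc[of 0 "p-1" e] z assms(1) by simp
  moreover have "lc e 0 (p + (r-p)) = lc e 0 p div 2^(r-p)" by (rule lc_zeros) (use assms in auto)
  ultimately show ?thesis using assms(2) by simp
qed

lemma spike1_rc:
  assumes "1 \<le> l" "l \<le> p" "p < b" "\<forall>q. l \<le> q \<and> q < b \<and> q \<noteq> p \<longrightarrow> e q = 0"
  shows "rc e b l = e p div 2^(p-l)"
proof -
  have z: "rc e b (Suc p) = 0" by (rule rc_allzero) (use assms in auto)
  have "rc e b p = e p" using rc_step[of p b e] z assms(3) by simp
  moreover have "rc e b l = rc e b (l + (p-l)) div 2^(p-l)" by (rule rc_zeros) (use assms in auto)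
  ultimately show ?thesis using assms(2) by simp
qed

lemma spike2_lc:
  assumes "1 \<le> p" "p + 1 \<le> r" "\<forall>q. 0 < q \<and> q \<le> r \<and> q \<noteq> p \<and> q \<noteq> p + 1 \<longrightarrow> e q = 0"
    "e p = t" "e (p+1) = t"
  shows "lc e 0 r = (t + t div 2) div 2^(r-p-1)"
proof -
  have z: "lc e 0 (p-1) = 0" by (rule lc_allzero) (use assms in auto)
  have "lc e 0 p = t" using lc_Suc[of 0 "p-1" e] z assms(1,4) by simp
  then have "lc e 0 (p+1) = t + t div 2" using lc_Suc[of 0 p e] assms(5) by simp
  moreover have "lc e 0 ((p+1) + (r-p-1)) = lc e 0 (p+1) div 2^(r-p-1)" by (rule lc_zeros) (use assms in auto)
  ultimately show ?thesis using assms(2) by simp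
qed

lemma spike2_rc:
  assumes "1 \<le> l" "l \<le> p" "p + 1 < b" "\<forall>q. l \<le> q \<and> q < b \<and> q \<noteq> p \<and> q \<noteq> p + 1 \<longrightarrow> e q = 0"
    "e p = t" "e (p+1) = t"
  shows "rc e b l = (t + t div 2) div 2^(p-l)"
proof -
  have z: "rc e b (Suc (Suc p)) = 0" by (rule rc_allzero) (use assms in auto)
  have "rc e b (Suc p) = t" using rc_step[of "Suc p" b e] z assms(3,6) by simp
  then have "rc e b p = t + t div 2" using rc_step[of p b e] assms(3,5) by simp
  moreover have "rc e b l = rc e b (l + (p-l)) div 2^(p-l)" by (rule rc_zeros) (use assms in auto)
  ultimately show ?thesis using assms(2) by simp
qed

lemma qb: "v < 2^(a + c) \<Longrightarrow> c \<le> 1 \<Longrightarrow> (v::nat) div 2^a \<le> c"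
proof -
  assume v: "v < 2^(a + c)" and c: "c \<le> 1"
  have "v < 2^c * 2^a" using v by (simp add: power_add mult.commute)
  then have "v div 2^a < 2^c" by (rule less_mult_imp_div_less)
  moreover have "(2::nat)^c = c + 1" using c by (cases c) auto
  ultimately show ?thesis by simp
qed

lemma w_bound: "(2^(k+1) div 3) + (2^(k+1) div 3) div 2 < (2::nat)^k"
proof -
  define t where "t = (2::nat)^(k+1) div 3"
  have "3 * t \<le> 2^(k+1)" unfolding t_def by simp
  moreover have "3 * t \<noteq> 2^(k+1)"
  proof
    assume "3 * t = 2^(k+1)"
    then have "(2::nat)^(k+1) mod 3 = 0" by (metis mod_mult_self1_is_0)
    then show False using pow2_mod3[of "k+1"] by simp
  qed
  ultimately have "3 * t < 2 * 2^k" by simp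
  moreover have "2 * (t + t div 2) \<le> 3 * t" by simp
  ultimately have "2 * (t + t div 2) < 2 * 2^k" by (rule le_less_trans[rotated])
  then show ?thesis unfolding t_def by simp
qed

definition prof :: "nat \<Rightarrow> nat \<Rightarrow> nat \<Rightarrow> nat" where
  "prof L c q = (if even L then (if q + c = L div 2 then 2^(L div 2) - 1 else 0)
     else (if q + c = L div 2 \<or> q + c = L div 2 + 1 then 2^(L div 2 + 1) div 3 else 0))"


lemma div2pow: "(x::nat) div 2^a div 2 = x div 2^(a+1)"
  by (simp only: power_add power_one_right div_mult2_eq)

lemma prof_facts:
  assumes n3: "3 \<le> n" and cl: "cl \<le> 1" and cr: "cr \<le> 1" and L: "L = n + cl + cr"
  shows "(\<Sum>q\<in>{1..<n}. prof L cl q) + 1 = fC L"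
    "lc (prof L cl) 0 (n-1) div 2 \<le> cr" "rc (prof L cl) n 1 div 2 \<le> cl"
proof -
  have all: "(\<Sum>q\<in>{1..<n}. prof L cl q) + 1 = fC L \<and>
    lc (prof L cl) 0 (n-1) div 2 \<le> cr \<and> rc (prof L cl) n 1 div 2 \<le> cl"
  proof (cases "even L")
    case True
    then obtain k where Lk: "L = 2*k" by blast
    define p where "p = k - cl"
    define v where "v = (2::nat)^k - 1"
    have kc: "cl \<le> k" "cr \<le> k" "1 \<le> p" "p \<le> n - 1" "n - p + cr = k" "p + cl = k"
      using n3 cl cr L Lk unfolding p_def by auto
    have e: "prof L cl q = (if q = p then v else 0)" for q
      unfolding prof_def v_def p_def using True Lk kc by auto
    have vk: "v < 2^k" unfolding v_def by simp
    have pn: "p < n" using kc n3 by linarith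
    have s: "(\<Sum>q\<in>{1..<n}. prof L cl q) = v" unfolding e using kc pn by (simp add: sum.delta)
    have f: "fC L = 2^k" unfolding fC_def using True Lk by simp
    have lcv: "lc (prof L cl) 0 (n-1) = v div 2^(n-1-p)"
      using spike1_lc[of p "n-1" "prof L cl"] kc unfolding e by auto
    have "n - 1 - p + 1 = n - p" using kc pn by linarith
    then have "v div 2^(n-1-p) div 2 = v div 2^(n-p)" using div2pow[of v "n-1-p"] by simp
    moreover have "v div 2^(n-p) \<le> cr" by (rule qb) (use vk kc cr in simp_all)
    ultimately have l: "lc (prof L cl) 0 (n-1) div 2 \<le> cr" using lcv by simp
    have rcv: "rc (prof L cl) n 1 = v div 2^(p-1)"
      using spike1_rc[of 1 p n "prof L cl"] kc n3 unfolding e by auto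
    have "p - 1 + 1 = p" using kc by linarith
    then have "v div 2^(p-1) div 2 = v div 2^p" using div2pow[of v "p-1"] by simp
    moreover have "v div 2^p \<le> cl" by (rule qb) (use vk kc cl in simp_all)
    ultimately have r: "rc (prof L cl) n 1 div 2 \<le> cl" using rcv by simp
    have "v + 1 = 2^k" unfolding v_def by simp
    then show ?thesis using s f l r by simp
  next
    case False
    then obtain k where Lk: "L = 2*k + 1" using oddE by blast
    define p where "p = k - cl"
    define t where "t = (2::nat)^(k+1) div 3"
    define w where "w = t + t div 2"
    have kc: "cl \<le> k" "cr \<le> k" "1 \<le> p" "p + 1 \<le> n - 1" "n - 1 - p + cr = k" "p + cl = k"
      using n3 cl cr L Lk unfolding p_def by auto
    have e: "prof L cl q = (if q = p then t else 0) + (if q = p + 1 then t else 0)" for q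
      unfolding prof_def t_def p_def using False Lk kc by auto
    have e2: "prof L cl q = (if q = p \<or> q = p + 1 then t else 0)" for q
      unfolding e by auto
    have wk: "w < 2^k" unfolding w_def t_def by (rule w_bound)
    have pn: "p + 1 < n" using kc n3 by linarith
    have s: "(\<Sum>q\<in>{1..<n}. prof L cl q) = t + t" unfolding e using kc pn by (simp add: sum.distrib sum.delta)
    have f: "fC L = 2 * t + 1" unfolding fC_def t_def using False Lk by simp
    have lcv: "lc (prof L cl) 0 (n-1) = w div 2^(n-1-p-1)"
      unfolding w_def by (rule spike2_lc) (use kc in \<open>auto simp: e2\<close>)
    have "n - 1 - p - 1 + 1 = n - 1 - p" using kc pn by linarith
    then have "w div 2^(n-1-p-1) div 2 = w div 2^(n-1-p)" using div2pow[of w "n-1-p-1"] by simp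
    moreover have "w div 2^(n-1-p) \<le> cr" by (rule qb) (use wk kc cr in simp_all)
    ultimately have l: "lc (prof L cl) 0 (n-1) div 2 \<le> cr" using lcv by simp
    have rcv: "rc (prof L cl) n 1 = w div 2^(p-1)"
      unfolding w_def by (rule spike2_rc) (use kc in \<open>auto simp: e2\<close>)
    have "p - 1 + 1 = p" using kc by linarith
    then have "w div 2^(p-1) div 2 = w div 2^p" using div2pow[of w "p-1"] by simp
    moreover have "w div 2^p \<le> cl" by (rule qb) (use wk kc cl in simp_all)
    ultimately have r: "rc (prof L cl) n 1 div 2 \<le> cl" using rcv by simp
    show ?thesis using s f l r by simp
  qed
  then show "(\<Sum>q\<in>{1..<n}. prof L cl q) + 1 = fC L"
    "lc (prof L cl) 0 (n-1) div 2 \<le> cr" "rc (prof L cl) n 1 div 2 \<le> cl" by auto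
qed


lemma dsize_blocks:
  assumes n2: "2 \<le> n" and m3: "3 \<le> m" and DU: "D U = 0" and lo: "\<forall>i\<le>n. D (V i) = 0"
  shows "dsize n m D = (\<Sum>j\<in>{1..<m}. D (V (j*n)) + (\<Sum>q\<in>{1..<n}. D (V (j*n+q))))"
proof -
  have "dsize n m D = (\<Sum>j<m. (\<Sum>q<n. D (V (j*n+q))))"
    using dsize_eq[where D=D and n=n and m=m, OF DU] blocks[where g="\<lambda>i. D (V i)" and n=n and m=m] by simp
  also have "\<dots> = (\<Sum>j\<in>{1..<m}. (\<Sum>q<n. D (V (j*n+q))))"
  proof -
    have "{..<m} = insert 0 {1..<m}" using m3 by auto
    moreover have "(\<Sum>q<n. D (V (0*n+q))) = 0" using lo by simp
    ultimately show ?thesis by simp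
  qed
  also have "\<dots> = (\<Sum>j\<in>{1..<m}. D (V (j*n)) + (\<Sum>q\<in>{1..<n}. D (V (j*n+q))))"
  proof (rule sum.cong)
    fix j
    have "{..<n} = insert 0 {1..<n}" using n2 by auto
    then show "(\<Sum>q<n. D (V (j*n+q))) = D (V (j*n)) + (\<Sum>q\<in>{1..<n}. D (V (j*n+q)))" by simp
  qed simp
  finally show ?thesis .
qed

lemma good_from_local:
  fixes cL cR :: "nat \<Rightarrow> nat"
  assumes n2: "2 \<le> n" and m3: "3 \<le> m"
    and dist: "\<forall>i. n*m \<le> i \<longrightarrow> D (V i) = 0" and DU: "D U = 0" and lo: "\<forall>i\<le>n. D (V i) = 0"
    and hL: "\<forall>j\<in>{1..<m}. rc (gv D) (j*n+n) (j*n+1) div 2 \<le> cL j"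
    and hR: "\<forall>j\<in>{1..<m}. lc (gv D) (j*n) (j*n+n-1) div 2 \<le> cR j"
    and hub: "\<forall>j\<in>{2..<m}. gv D (j*n) + cR (j-1) + cL j \<le> 1"
    and e: "cL 1 = 0" "cR (m-1) = 0"
  shows "good_dist n m D"
proof -
  have G: "Good n m D" unfolding Good_def using LG[OF n2 m3 hL hR hub e] DU lo dist by blast
  have isd: "is_distribution n m D" unfolding is_distribution_def
  proof (intro allI impI)
    fix x assume x: "x \<notin> jvertices n m"
    show "D x = 0"
    proof (cases x)
      case U then show ?thesis using DU by simp
    next
      case (V i)
      have "\<not> i < n*m"
      proof
        assume "i < n*m" then have "x \<in> jvertices n m" unfolding jvertices_def using V by auto
        with x show False ..
      qed
      then show ?thesis using dist V by simp
    qed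
  qed
  show ?thesis unfolding good_dist_def using isd lo Good_unreach[OF n2 m3 G] by blast
qed

lemma evens: "(\<Sum>j\<in>{1..<M}. (if even j then 1 else 0::nat)) = (M - 1) div 2"
proof (induction M)
  case 0 then show ?case by simp
next
  case (Suc M)
  show ?case
  proof (cases "M = 0")
    case True then show ?thesis by simp
  next
    case False
    then have "(\<Sum>j\<in>{1..<Suc M}. (if even j then 1 else 0::nat)) = (M - 1) div 2 + (if even M then 1 else 0)"
      using Suc by simp
    also have "\<dots> = M div 2" using False by (cases "even M") (auto elim!: evenE oddE)
    finally show ?thesis by simp
  qed
qed

lemma seg_val_eq:
  assumes "c \<le> 2" "1 \<le> fC n" "fC n + 1 \<le> fC (n+1)"
    "fC (n+1) - fC n \<le> fC (n+2) - fC (n+1)" "fC (n+1) \<le> fC (n+2)"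
  shows "fC (n + c) - 1 = (fC n - 1) + (fC (n+1) - fC n)*c + ((fC (n+2) - fC (n+1)) - (fC (n+1) - fC n))*(c div 2)"
proof -
  have "c = 0 \<or> c = 1 \<or> c = 2" using assms(1) by auto
  then show ?thesis using assms by auto
qed


definition cLf :: "nat \<Rightarrow> nat" where "cLf j = (if even j then 1 else 0)"
definition cRf :: "nat \<Rightarrow> nat \<Rightarrow> nat" where "cRf m j = (if even j \<and> j \<noteq> m - 1 then 1 else 0)"
definition Dst :: "nat \<Rightarrow> nat \<Rightarrow> jvert \<Rightarrow> nat" where
  "Dst n m x = (case x of U \<Rightarrow> 0 | V i \<Rightarrow> (if n < i \<and> i < n*m \<and> \<not> n dvd i
      then prof (n + cLf (i div n) + cRf m (i div n)) (cLf (i div n)) (i mod n) else 0))"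

lemma Dst_seg:
  assumes "1 \<le> j" "j < m" "1 \<le> q" "q < n"
  shows "Dst n m (V (j*n+q)) = prof (n + cLf j + cRf m j) (cLf j) q"
proof -
  have d: "(j*n+q) div n = j" "(j*n+q) mod n = q" using assms by auto
  have "n \<le> j*n" using assms by simp
  then have a: "n < j*n+q" using assms by linarith
  have "(j+1)*n \<le> m*n" using assms by (intro mult_le_mono1) simp
  then have b: "j*n+q < n*m" using assms by (simp add: algebra_simps)
  have c: "\<not> n dvd (j*n+q)" using d(2) assms by (metis dvd_imp_mod_0 not_one_le_zero le_zero_eq)
  show ?thesis unfolding Dst_def using a b c d by simp
qed

lemma Dst_hub: "Dst n m (V (j*n)) = 0"
  unfolding Dst_def by simp

lemma lower3:
  assumes n3: "3 \<le> n" and m3: "3 \<le> m"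
  shows "good_dist n m (Dst n m) \<and> int (dsize n m (Dst n m)) = alpha n m"
proof -
  have n2: "2 \<le> n" using n3 by simp
  define D where "D = Dst n m"
  define g where "g = gv D"
  have gseg: "g (j*n+q) = prof (n + cLf j + cRf m j) (cLf j) q" if "j \<in> {1..<m}" "1 \<le> q" "q < n" for j q
    unfolding g_def gv_def D_def using Dst_seg[of j m q n] that by auto
  have cl1: "cLf j \<le> 1" "cRf m j \<le> 1" for j unfolding cLf_def cRf_def by auto
  have lcl: "lc g (j*n) (j*n+n-1) = lc (prof (n + cLf j + cRf m j) (cLf j)) 0 (n-1)" if j: "j \<in> {1..<m}" for j
  proof -
    have "lc g (j*n) (j*n+(n-1)) = lc (\<lambda>q. g (j*n+q)) 0 (n-1)" by (rule lc_shift)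
    also have "\<dots> = lc (prof (n + cLf j + cRf m j) (cLf j)) 0 (n-1)"
      by (rule lc_cong) (use gseg j n3 in auto)
    finally show ?thesis using n3 by simp
  qed
  have rcl: "rc g (j*n+n) (j*n+1) = rc (prof (n + cLf j + cRf m j) (cLf j)) n 1" if j: "j \<in> {1..<m}" for j
  proof -
    have "rc g (j*n+n) (j*n+1) = rc (\<lambda>q. g (j*n+q)) n 1" by (rule rc_shift)
    also have "\<dots> = rc (prof (n + cLf j + cRf m j) (cLf j)) n 1"
      by (rule rc_cong) (use gseg j in auto)
    finally show ?thesis .
  qed
  note PF = prof_facts[OF n3 cl1(1) cl1(2) refl]
  have hL: "\<forall>j\<in>{1..<m}. rc g (j*n+n) (j*n+1) div 2 \<le> cLf j" using rcl PF(3) by simp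
  have hR: "\<forall>j\<in>{1..<m}. lc g (j*n) (j*n+n-1) div 2 \<le> cRf m j" using lcl PF(2) by simp
  have hsum: "cRf m (j-1) + cLf j = 1" if "j \<in> {2..<m}" for j
    using that unfolding cLf_def cRf_def by auto
  have hub: "\<forall>j\<in>{2..<m}. g (j*n) + cRf m (j-1) + cLf j \<le> 1"
    using hsum unfolding g_def gv_def D_def Dst_hub by simp
  have e: "cLf 1 = 0" "cRf m (m-1) = 0" unfolding cLf_def cRf_def by auto
  have DU: "D U = 0" unfolding D_def Dst_def by simp
  have lo: "\<forall>i\<le>n. D (V i) = 0" unfolding D_def Dst_def by simp
  have hi: "\<forall>i. n*m \<le> i \<longrightarrow> D (V i) = 0" unfolding D_def Dst_def by simp
  have good: "good_dist n m D"
    by (rule good_from_local[OF n2 m3 hi DU lo hL[unfolded g_def] hR[unfolded g_def] hub[unfolded g_def] e])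
  define c where "c j = cLf j + cRf m j" for j
  note fcf = fC_facts[OF n2]
  define e0 where "e0 = fC n - 1"
  define d1 where "d1 = fC (n+1) - fC n"
  define d2 where "d2 = fC (n+2) - fC (n+1)"
  have ds: "dsize n m D = (\<Sum>j\<in>{1..<m}. e0 + d1 * c j + (d2 - d1) * (c j div 2))"
  proof -
    have "dsize n m D = (\<Sum>j\<in>{1..<m}. D (V (j*n)) + (\<Sum>q\<in>{1..<n}. D (V (j*n+q))))"
      by (rule dsize_blocks[OF n2 m3 DU lo])
    also have "\<dots> = (\<Sum>j\<in>{1..<m}. e0 + d1 * c j + (d2 - d1) * (c j div 2))"
    proof (rule sum.cong)
      fix j assume j: "j \<in> {1..<m}"
      have "(\<Sum>q\<in>{1..<n}. D (V (j*n+q))) = (\<Sum>q\<in>{1..<n}. prof (n + cLf j + cRf m j) (cLf j) q)"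
        by (rule sum.cong) (use gseg j in \<open>auto simp: g_def gv_def\<close>)
      also have "\<dots> = fC (n + c j) - 1"
        using prof_facts(1)[OF n3 cl1(1)[of j] cl1(2)[of j] refl] unfolding c_def by (simp add: add.assoc)
      also have "\<dots> = e0 + d1 * c j + (d2 - d1) * (c j div 2)" unfolding e0_def d1_def d2_def
        by (rule seg_val_eq) (use fcf cl1[of j] in \<open>simp_all add: c_def\<close>)
      finally show "D (V (j*n)) + (\<Sum>q\<in>{1..<n}. D (V (j*n+q))) = e0 + d1 * c j + (d2 - d1) * (c j div 2)"
        unfolding D_def Dst_hub by simp
    qed simp
    finally show ?thesis .
  qed
  have sc: "(\<Sum>j\<in>{1..<m}. c j) = m - 2"
  proof -
    have "(\<Sum>j\<in>{1..<m}. c j) = (\<Sum>j\<in>{1..<m}. cLf j) + (\<Sum>j\<in>{1..<m}. cRf m j)"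
      unfolding c_def by (simp add: sum.distrib)
    also have "(\<Sum>j\<in>{1..<m}. cLf j) = (\<Sum>j\<in>{2..<m}. cLf j)"
    proof -
      have "{1..<m} = insert 1 {2..<m}" using m3 by auto
      then show ?thesis using e by simp
    qed
    also have "(\<Sum>j\<in>{1..<m}. cRf m j) = (\<Sum>j\<in>{2..<m}. cRf m (j-1))" using shift_cR[OF m3, of "cRf m"] e by simp
    also have "(\<Sum>j\<in>{2..<m}. cLf j) + (\<Sum>j\<in>{2..<m}. cRf m (j-1)) = (\<Sum>j\<in>{2..<m}. (1::nat))"
      unfolding sum.distrib[symmetric] using hsum by (intro sum.cong) (auto simp: add.commute)
    finally show ?thesis by simp
  qed
  have sk: "(\<Sum>j\<in>{1..<m}. c j div 2) = (m - 2) div 2"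
  proof -
    have cj: "c j div 2 = (if even j \<and> j \<noteq> m - 1 then 1 else 0)" for j
      unfolding c_def cLf_def cRf_def by auto
    have "{1..<m} = {1..<m-1} \<union> {m-1}" using m3 by auto
    then have "(\<Sum>j\<in>{1..<m}. c j div 2) = (\<Sum>j\<in>{1..<m-1}. c j div 2) + c (m-1) div 2" by simp
    also have "c (m-1) div 2 = 0" using cj by simp
    also have "(\<Sum>j\<in>{1..<m-1}. c j div 2) = (\<Sum>j\<in>{1..<m-1}. (if even j then 1 else 0))"
      by (rule sum.cong) (auto simp: cj)
    also have "\<dots> = (m - 2) div 2" using evens[of "m-1"] by simp
    finally show ?thesis by simp
  qed
  have "dsize n m D = (m-1)*e0 + d1*(m-2) + (d2-d1)*((m-2) div 2)"
  proof -
    have "(\<Sum>j\<in>{1..<m}. e0 + d1 * c j + (d2 - d1) * (c j div 2))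
      = (\<Sum>j\<in>{1..<m}. e0) + d1 * (\<Sum>j\<in>{1..<m}. c j) + (d2 - d1) * (\<Sum>j\<in>{1..<m}. c j div 2)"
      by (simp add: sum.distrib sum_distrib_left)
    also have "\<dots> = (m-1)*e0 + d1*(m-2) + (d2-d1)*((m-2) div 2)" unfolding sc sk by simp
    finally show ?thesis unfolding ds .
  qed
  then have "int (dsize n m D) = alpha n m"
    using alpha_eq[OF n2 m3 fcf] unfolding e0_def d1_def d2_def by simp
  then show ?thesis using good unfolding D_def by simp
qed


definition D2 :: "nat \<Rightarrow> jvert \<Rightarrow> nat" where
  "D2 m x = (case x of U \<Rightarrow> 0 | V i \<Rightarrow> (if 2 < i \<and> i < 2*m then 1 else 0))"

lemma lower2:
  assumes m3: "3 \<le> m"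
  shows "good_dist 2 m (D2 m) \<and> int (dsize 2 m (D2 m)) = alpha 2 m"
proof -
  define D where "D = D2 m"
  define g where "g = gv D"
  have g1: "g (j*2+1) = 1" if "j \<in> {1..<m}" for j
    using that unfolding g_def gv_def D_def D2_def by auto
  have gle: "g i \<le> 1" for i unfolding g_def gv_def D_def D2_def by auto
  have lcv: "lc g (j*2) (j*2+2-1) = 1" if "j \<in> {1..<m}" for j
    using lc_Suc[of "j*2" "j*2" g] g1[OF that] by simp
  have rcv: "rc g (j*2+2) (j*2+1) = 1" if "j \<in> {1..<m}" for j
    using rc_step[of "j*2+1" "j*2+2" g] g1[OF that] by simp
  have hL: "\<forall>j\<in>{1..<m}. rc g (j*2+2) (j*2+1) div 2 \<le> (\<lambda>_. 0::nat) j" using rcv by simp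
  have hR: "\<forall>j\<in>{1..<m}. lc g (j*2) (j*2+2-1) div 2 \<le> (\<lambda>_. 0::nat) j" using lcv by simp
  have hub: "\<forall>j\<in>{2..<m}. g (j*2) + (\<lambda>_. 0::nat) (j-1) + (\<lambda>_. 0::nat) j \<le> 1" using gle by simp
  have DU: "D U = 0" unfolding D_def D2_def by simp
  have lo: "\<forall>i\<le>2. D (V i) = 0" unfolding D_def D2_def by simp
  have hi: "\<forall>i. 2*m \<le> i \<longrightarrow> D (V i) = 0" unfolding D_def D2_def by simp
  have good: "good_dist 2 m D"
    by (rule good_from_local[where cL="\<lambda>_. 0" and cR="\<lambda>_. 0", OF _ m3 hi DU lo hL[unfolded g_def] hR[unfolded g_def] hub[unfolded g_def]]) simp_all
  have "dsize 2 m D = (\<Sum>j\<in>{1..<m}. D (V (j*2)) + (\<Sum>q\<in>{1..<2}. D (V (j*2+q))))"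
    by (rule dsize_blocks[OF _ m3 DU lo]) simp
  also have "\<dots> = (\<Sum>j\<in>{1..<m}. (if 2 \<le> j then 1 else 0) + 1)"
    by (rule sum.cong) (auto simp: D_def D2_def)
  also have "\<dots> = (\<Sum>j\<in>{1..<m}. (if 2 \<le> j then 1 else 0)) + (m - 1)" by (subst sum.distrib) simp
  also have "(\<Sum>j\<in>{1..<m}. (if 2 \<le> j then 1 else (0::nat))) = m - 2"
  proof -
    have "{1..<m} = insert 1 {2..<m}" using m3 by auto
    then have "(\<Sum>j\<in>{1..<m}. (if 2 \<le> j then 1 else (0::nat))) = (\<Sum>j\<in>{2..<m}. (if 2 \<le> j then 1 else 0))" by simp
    also have "\<dots> = (\<Sum>j\<in>{2..<m}. (1::nat))" by (rule sum.cong) auto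
    finally show ?thesis by simp
  qed
  finally have ds: "dsize 2 m D = (m - 2) + (m - 1)" .
  have f: "fC 2 = 2" "fC 3 = 3" "fC 4 = 4" unfolding fC_def by simp_all
  have fcf: "1 \<le> fC 2" "fC 2 + 1 \<le> fC (2+1)" "fC (2+1) - fC 2 \<le> fC (2+2) - fC (2+1)" "fC (2+1) \<le> fC (2+2)"
    using f by simp_all
  have "int ((m-1)*(fC 2 - 1) + (fC (2+1) - fC 2)*(m-2) + ((fC (2+2) - fC (2+1)) - (fC (2+1) - fC 2))*((m-2) div 2)) = alpha 2 m"
    by (rule alpha_eq[OF _ m3 fcf]) simp
  moreover have f': "fC (2+1) = 3" "fC (2+2) = 4" unfolding fC_def by simp_all
  ultimately have "int ((m - 2) + (m - 1)) = alpha 2 m" unfolding f' f(1) by (simp add: add.commute)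
  then show ?thesis using good ds unfolding D_def by simp
qed

theorem lemma2p9:
  fixes n m :: nat
  assumes "n \<ge> 2" and "m \<ge> 8"
  shows "(\<forall>D. good_dist n m D \<longrightarrow> int (dsize n m D) \<le> alpha n m)
       \<and> (\<exists>D. good_dist n m D \<and> int (dsize n m D) = alpha n m)"
proof
  have m3: "3 \<le> m" using assms by simp
  show "\<forall>D. good_dist n m D \<longrightarrow> int (dsize n m D) \<le> alpha n m"
    using upper[OF assms(1) m3] by blast
  show "\<exists>D. good_dist n m D \<and> int (dsize n m D) = alpha n m"
  proof (cases "n = 2")
    case True then show ?thesis using lower2[OF m3] by blast
  next
    case False then have "3 \<le> n" using assms by simp
    then show ?thesis using lower3[OF _ m3] by blast
  qed
qed


end
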